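(* Let $\mathbf a\in C^1([0,T]\times\mathbb R^N;\mathbb R^N)$ be bounded and satisfy the OSLC condition with $\alpha\in L^1_+(0,T)$, and let $u\in C^2([0,T]\times\mathbb R^N)$ be a classical solution of $\partial_tu+\mathbf a\cdot\nabla u=0$. Then for every $0\le t\le T$, every $x_0\in\mathbb R^N$ and every $R>0$, $$\int_{B(x_0,R)}\sum_{i=1}^N\Bigl|\frac{\partial u}{\partial x_i}(t,x)\Bigr|dx\le\sqrt N\,e^{(N-1)\int_0^t\alpha(s)ds}\int_{B(x_0,R+t\|\mathbf a\|_\infty)}\sum_{i=1}^N\Bigl|\frac{\partial u}{\partial x_i}(0,x)\Bigr|dx.$$
   Context: OSLC: $\langle \mathbf a(t,y)-\mathbf a(t,x),y-x\rangle\le\alpha(t)|y-x|^2$ for all $(t,x,y)$ (a.e.), with $\alpha\ge0$, $\alpha\in L^1(0,T)$. *)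

theory Defs
  imports "HOL-Analysis.Analysis"
begin

definition has_C1_derivative_on ::
  "('a::real_normed_vector \<Rightarrow> 'b::real_normed_vector) \<Rightarrow> ('a \<Rightarrow> ('a \<Rightarrow>\<^sub>L 'b)) \<Rightarrow> 'a set \<Rightarrow> bool" where
  "has_C1_derivative_on f Df S \<longleftrightarrow>
     (\<forall>p\<in>S. (f has_derivative blinfun_apply (Df p)) (at p within S)) \<and> continuous_on S Df"

definition C1_on :: "('a::real_normed_vector \<Rightarrow> 'b::real_normed_vector) \<Rightarrow> 'a set \<Rightarrow> bool" where
  "C1_on f S \<longleftrightarrow> (\<exists>Df. has_C1_derivative_on f Df S)"

end

theory Submission
  imports Defs
begin
definition sq0 :: "real \<Rightarrow> real" where "sq0 y = (max 0 y)^2"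

lemma sq0_deriv: "(sq0 has_real_derivative (2 * max 0 y)) (at y)"
proof (cases "y = 0")
  case True
  have "((\<lambda>z. sq0 z) has_real_derivative 0) (at 0)"
    unfolding has_field_derivative_iff
  proof -
    have "((\<lambda>z. (sq0 z - sq0 0) / (z - 0)) \<longlongrightarrow> 0) (at 0)"
    proof (rule Lim_null_comparison[where g="\<lambda>z. \<bar>z\<bar>"])
      show "\<forall>\<^sub>F z in at 0. norm ((sq0 z - sq0 0) / (z - 0)) \<le> \<bar>z\<bar>"
        by (auto simp: sq0_def max_def power2_eq_square abs_mult divide_simps)
      show "((\<lambda>z::real. \<bar>z\<bar>) \<longlongrightarrow> 0) (at 0)"
        by (auto intro!: tendsto_eq_intros)
    qed
    then show "((\<lambda>z. (sq0 z - sq0 0) / (z - 0)) \<longlongrightarrow> 0) (at 0)" .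
  qed
  then show ?thesis using True by simp
next
  case False
  show ?thesis
  proof (cases "y > 0")
    case True
    have "((\<lambda>z. z^2) has_real_derivative 2 * y) (at y)"
      by (auto intro!: derivative_eq_intros)
    moreover have "\<forall>\<^sub>F z in nhds y. z \<in> {0<..}"
      by (rule eventually_nhds_in_open) (use True in auto)
    then have "\<forall>\<^sub>F z in nhds y. z^2 = sq0 z"
      by (rule eventually_mono) (auto simp: sq0_def)
    ultimately show ?thesis using True
      by (subst (asm) DERIV_cong_ev[OF refl _ refl]) (auto simp: max_def)
  next
    case F2: False
    with False have "y < 0" by simp
    have "((\<lambda>z. 0) has_real_derivative 0) (at y)"
      by (auto intro!: derivative_eq_intros)
    moreover have "\<forall>\<^sub>F z in nhds y. z \<in> {..<0}"
      by (rule eventually_nhds_in_open) (use \<open>y<0\<close> in auto)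
    then have "\<forall>\<^sub>F z in nhds y. 0 = sq0 z"
      by (rule eventually_mono) (auto simp: sq0_def)
    ultimately show ?thesis using \<open>y<0\<close>
      by (subst (asm) DERIV_cong_ev[OF refl _ refl]) (auto simp: max_def)
  qed
qed

lemma vec_expand: "(w::real^'n) = (\<Sum>i\<in>UNIV. (w$i) *\<^sub>R axis i 1)"
  by (simp add: vec_eq_iff axis_def sum_component if_distrib cong: if_cong)

lemma discr_le:
  fixes a b c :: real
  assumes "\<And>x y. 0 \<le> a*x^2 + 2*b*x*y + c*y^2"
  shows "b^2 \<le> a*c"
proof -
  have a: "0 \<le> a" using assms[of 1 0] by simp
  have c: "0 \<le> c" using assms[of 0 1] by simp
  show ?thesis
  proof (cases "a = 0")
    case True
    have "b = 0"
    proof (rule ccontr)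
      assume "b \<noteq> 0"
      have "0 \<le> 2*b*(-(c+1)/(2*b)) + c" using assms[of "-(c+1)/(2*b)" 1] True by simp
      also have "2*b*(-(c+1)/(2*b)) = -(c+1)" using \<open>b \<noteq> 0\<close> by (simp add: field_simps)
      finally show False by simp
    qed
    then show ?thesis using True by simp
  next
    case False
    hence "0 < a" using a by simp
    have "0 \<le> a*b^2 - 2*b*b*a + c*a^2" using assms[of "-b" a] by (simp add: power2_eq_square algebra_simps)
    hence "0 \<le> a * (a*c - b^2)" by (simp add: power2_eq_square algebra_simps)
    with \<open>0<a\<close> show ?thesis by (simp add: zero_le_mult_iff)
  qed
qed

lemma psd_trace:
  fixes Q :: "real^'n \<Rightarrow> real^'n"
  assumes lin: "linear Q" and psd: "\<And>v. 0 \<le> inner (Q v) v"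
  shows "inner (Q w) w \<le> (\<Sum>i\<in>UNIV. inner (Q (axis i 1)) (axis i 1)) * (norm w)^2"
proof -
  define q where "q i j = inner (Q (axis i 1)) (axis j 1)" for i j
  define s where "s i j = (q i j + q j i)/2" for i j
  have expand: "inner (Q v) v = (\<Sum>i\<in>UNIV. \<Sum>j\<in>UNIV. v$i * v$j * q j i)" for v
  proof -
    have "inner (Q v) v = inner (Q (\<Sum>i\<in>UNIV. (v$i) *\<^sub>R axis i 1)) (\<Sum>j\<in>UNIV. (v$j) *\<^sub>R axis j 1)"
      by (simp flip: vec_expand)
    also have "\<dots> = (\<Sum>i\<in>UNIV. \<Sum>j\<in>UNIV. v$i * v$j * q j i)"
      by (simp add: linear_sum[OF lin] linear_cmul[OF lin] inner_sum_left inner_sum_right q_def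
          sum_distrib_left algebra_simps)
    finally show ?thesis .
  qed
  have sym: "(\<Sum>i\<in>UNIV. \<Sum>j\<in>UNIV. v$i * v$j * q j i) = (\<Sum>i\<in>UNIV. \<Sum>j\<in>UNIV. v$i * v$j * s i j)" for v
  proof -
    have "(\<Sum>i\<in>UNIV. \<Sum>j\<in>UNIV. v$i * v$j * q j i) = (\<Sum>i\<in>UNIV. \<Sum>j\<in>UNIV. v$i * v$j * q i j)"
      by (subst sum.swap) (simp add: mult.commute)
    then show ?thesis
      by (simp add: s_def sum.distrib algebra_simps sum_divide_distrib[symmetric] add_divide_distrib)
  qed
  have sii: "s i i = q i i" for i by (simp add: s_def)
  have qii: "0 \<le> q i i" for i using psd[of "axis i 1"] by (simp add: q_def)
  have sbound: "(s i j)^2 \<le> q i i * q j j" for i j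
  proof (cases "i = j")
    case True then show ?thesis by (simp add: sii power2_eq_square)
  next
    case False
    show ?thesis
    proof (rule discr_le)
      fix x y
      have "0 \<le> inner (Q (x *\<^sub>R axis i 1 + y *\<^sub>R axis j 1)) (x *\<^sub>R axis i 1 + y *\<^sub>R axis j 1)"
        by (rule psd)
      also have "\<dots> = q i i * x^2 + 2 * s i j * x * y + q j j * y^2"
        by (simp add: linear_add[OF lin] linear_cmul[OF lin] inner_add_left inner_add_right q_def s_def
            power2_eq_square algebra_simps)
      finally show "0 \<le> q i i * x^2 + 2 * s i j * x * y + q j j * y^2" .
    qed
  qed
  have sabs: "\<bar>s i j\<bar> \<le> sqrt (q i i) * sqrt (q j j)" for i j
    using sbound[of i j] qii[of i] qii[of j]
    by (metis real_sqrt_abs real_sqrt_le_mono real_sqrt_mult)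
  have "inner (Q w) w = (\<Sum>i\<in>UNIV. \<Sum>j\<in>UNIV. w$i * w$j * s i j)"
    by (simp add: expand sym)
  also have "\<dots> \<le> (\<Sum>i\<in>UNIV. \<Sum>j\<in>UNIV. (\<bar>w$i\<bar> * sqrt (q i i)) * (\<bar>w$j\<bar> * sqrt (q j j)))"
  proof (intro sum_mono)
    fix i j
    have "w$i * w$j * s i j \<le> \<bar>w$i * w$j * s i j\<bar>" by simp
    also have "\<dots> = \<bar>w$i\<bar> * \<bar>w$j\<bar> * \<bar>s i j\<bar>" by (simp add: abs_mult)
    also have "\<dots> \<le> \<bar>w$i\<bar> * \<bar>w$j\<bar> * (sqrt (q i i) * sqrt (q j j))"
      by (intro mult_left_mono sabs) auto
    finally show "w$i * w$j * s i j \<le> (\<bar>w$i\<bar> * sqrt (q i i)) * (\<bar>w$j\<bar> * sqrt (q j j))"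
      by (simp add: algebra_simps)
  qed
  also have "\<dots> = (\<Sum>i\<in>UNIV. \<bar>w$i\<bar> * sqrt (q i i))^2"
    by (simp add: power2_eq_square sum_product)
  also have "\<dots> \<le> (\<Sum>i\<in>UNIV. (\<bar>w$i\<bar>)^2) * (\<Sum>i\<in>UNIV. (sqrt (q i i))^2)"
    by (rule Cauchy_Schwarz_ineq_sum)
  also have "(\<Sum>i\<in>UNIV. (sqrt (q i i))^2) = (\<Sum>i\<in>UNIV. q i i)"
    using qii by simp
  also have "(\<Sum>i\<in>UNIV. (\<bar>w$i\<bar>)^2) = inner w w"
    by (simp add: inner_vec_def power2_eq_square)
  also have "inner w w = (norm w)^2"
    by (simp add: power2_norm_eq_inner)
  finally show ?thesis by (simp add: q_def mult.commute)
qed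

lemma trace_bound:
  fixes A :: "real^'n \<Rightarrow> real^'n"
  assumes lin: "linear A" and osl: "\<And>v. inner (A v) v \<le> c * (norm v)^2"
  shows "(\<Sum>i\<in>UNIV. inner (A (axis i 1)) (axis i 1)) * (norm w)^2 - inner (A w) w
           \<le> (real CARD('n) - 1) * c * (norm w)^2"
proof -
  define Q where "Q v = c *\<^sub>R v - A v" for v
  have linQ: "linear Q"
    by (auto simp: linear_iff Q_def linear_add[OF lin] linear_cmul[OF lin] algebra_simps)
  have psd: "0 \<le> inner (Q v) v" for v
    using osl[of v] by (simp add: Q_def inner_diff_left power2_norm_eq_inner)
  have "inner (Q w) w \<le> (\<Sum>i\<in>UNIV. inner (Q (axis i 1)) (axis i 1)) * (norm w)^2"
    by (rule psd_trace[OF linQ psd])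
  moreover have "(\<Sum>i\<in>UNIV. inner (Q (axis i 1)) (axis i 1)) = real CARD('n) * c - (\<Sum>i\<in>UNIV. inner (A (axis i 1)) (axis i 1))"
    by (simp add: Q_def inner_diff_left sum_subtractf)
  moreover have "inner (Q w) w = c * (norm w)^2 - inner (A w) w"
    by (simp add: Q_def inner_diff_left power2_norm_eq_inner)
  ultimately show ?thesis by (simp add: algebra_simps)
qed

definition step :: "real \<Rightarrow> real \<Rightarrow> real" where
  "step h y = (sq0 y - 2 * sq0 (y - h) + sq0 (y - 2*h)) / (2 * h^2)"
definition dstep :: "real \<Rightarrow> real \<Rightarrow> real" where
  "dstep h y = (max 0 y - 2 * max 0 (y - h) + max 0 (y - 2*h)) / h^2"

lemma step_deriv: assumes "0 < h" shows "(step h has_real_derivative dstep h y) (at y)"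
proof -
  have d0: "(sq0 has_real_derivative 2*max 0 y) (at y)" by (rule sq0_deriv)
  have d1: "((\<lambda>y. sq0 (y - h)) has_real_derivative 2*max 0 (y-h) * 1) (at y)"
    by (rule DERIV_chain2[OF sq0_deriv]) (auto intro!: derivative_eq_intros)
  have d2: "((\<lambda>y. sq0 (y - 2*h)) has_real_derivative 2*max 0 (y-2*h) * 1) (at y)"
    by (rule DERIV_chain2[OF sq0_deriv]) (auto intro!: derivative_eq_intros)
  have "((\<lambda>y. (sq0 y - 2 * sq0 (y - h) + sq0 (y - 2*h)) / (2 * h^2)) has_real_derivative
     ((2 * max 0 y) - 2 * (2*max 0 (y-h) * 1) + 2*max 0 (y-2*h) * 1) / (2*h^2)) (at y)"
    by (intro DERIV_cdivide DERIV_add DERIV_diff DERIV_cmult d0 d1 d2)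
  moreover have eq: "((2 * max 0 y) - 2 * (2*max 0 (y-h) * 1) + 2*max 0 (y-2*h) * 1) / (2*h^2) = dstep h y"
    unfolding dstep_def using assms by (simp add: field_simps)
  ultimately show ?thesis unfolding step_def[abs_def] by simp
qed

lemma continuous_dstep: assumes "0 < h" shows "continuous_on UNIV (dstep h)"
  unfolding dstep_def[abs_def] using assms by (intro continuous_intros) auto

lemma step_le0: "y \<le> 0 \<Longrightarrow> 0 < h \<Longrightarrow> step h y = 0"
  by (simp add: step_def sq0_def max_def)

lemma step_ge: "2*h \<le> y \<Longrightarrow> 0 < h \<Longrightarrow> step h y = 1"
  by (simp add: step_def sq0_def max_def power2_eq_square field_simps)

lemma step_bounds: assumes "0 < h" shows "0 \<le> step h y" "step h y \<le> 1"
proof -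
  have "0 \<le> step h y \<and> step h y \<le> 1"
  proof (cases "y \<le> 0")
    case True then show ?thesis using step_le0[OF True assms] by simp
  next
    case F1: False
    show ?thesis
    proof (cases "y \<le> h")
      case True
      have "step h y = y^2 / (2*h^2)" using F1 True assms by (simp add: step_def sq0_def max_def)
      moreover have "y^2 \<le> h^2" using F1 True assms by (intro power_mono) auto
      then have "y^2 \<le> 2*h^2" using zero_le_power2[of h] by linarith
      moreover have "y^2/(2*h^2) \<le> 1" using \<open>y^2 \<le> 2*h^2\<close> assms by (simp add: pos_divide_le_eq)
      ultimately show ?thesis by simp
    next
      case F2: False
      show ?thesis
      proof (cases "y \<le> 2*h")
        case True
        have "step h y = (y^2 - 2*(y-h)^2) / (2*h^2)" using F2 True assms by (simp add: step_def sq0_def max_def)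
        also have "\<dots> = 1 - (2*h - y)^2 / (2*h^2)" using assms by (simp add: field_simps power2_eq_square)
        finally have e: "step h y = 1 - (2*h - y)^2 / (2*h^2)" .
        have "(2*h - y)^2 \<le> h^2" using F2 True assms by (intro power_mono) auto
        then have "(2*h - y)^2 \<le> 1 * (2*h^2)" using zero_le_power2[of h] by linarith
        then have "(2*h - y)^2 / (2*h^2) \<le> 1" using assms by (subst pos_divide_le_eq) auto
        then show ?thesis using e by (simp add: divide_nonneg_nonneg)
      next
        case False then show ?thesis using step_ge[of h y] assms by simp
      qed
    qed
  qed
  then show "0 \<le> step h y" "step h y \<le> 1" by auto
qed

lemma dstep_nonneg: assumes "0 < h" shows "0 \<le> dstep h y"
  using assms unfolding dstep_def by (intro divide_nonneg_nonneg) (auto simp: max_def)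

lemma dstep_zero: assumes "0 < h" "y \<le> 0 \<or> 2*h \<le> y" shows "dstep h y = 0"
  using assms unfolding dstep_def by (auto simp: max_def)

lemma eps_le:
  fixes x y z :: real
  assumes "\<And>e. 0 < e \<Longrightarrow> x \<le> y + e * z" "0 \<le> z"
  shows "x \<le> y"
proof (rule field_le_epsilon)
  fix e :: real assume "0 < e"
  have ez: "0 < e/(z+1)" using assms(2) \<open>0<e\<close> by simp
  have "x \<le> y + (e/(z+1)) * z" by (rule assms(1)[OF ez])
  also have "(e/(z+1)) * z \<le> e" using \<open>0<e\<close> assms(2) by (simp add: divide_simps)
  finally show "x \<le> y + e" by simp
qed

lemma gronwall_discrete:
  fixes \<Phi> A :: "real \<Rightarrow> real" and t c d :: real
  assumes t: "0 \<le> t" and cont: "continuous_on {0..t} \<Phi>" and nn: "\<And>s. s \<in> {0..t} \<Longrightarrow> 0 \<le> \<Phi> s"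
    and mono: "\<And>s1 s2. 0 \<le> s1 \<Longrightarrow> s1 \<le> s2 \<Longrightarrow> s2 \<le> t \<Longrightarrow> A s1 \<le> A s2"
    and A0: "A 0 = 0" and c: "0 \<le> c" and d: "0 \<le> d"
    and stp: "\<And>s1 s2 B. 0 \<le> s1 \<Longrightarrow> s1 \<le> s2 \<Longrightarrow> s2 \<le> t \<Longrightarrow> (\<forall>r\<in>{s1..s2}. \<Phi> r \<le> B) \<Longrightarrow>
       \<Phi> s2 - \<Phi> s1 \<le> (A s2 - A s1) * (c * B + d)"
  shows "\<Phi> t \<le> exp (c * A t) * (\<Phi> 0 + d * A t)"
proof (rule eps_le)
  show "0 \<le> exp (c * A t) * (c * A t)"
    using mono[of 0 t] t A0 c by simp
  fix \<eta> :: real assume "0 < \<eta>"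
  have uc: "uniformly_continuous_on {0..t} \<Phi>"
    by (rule compact_uniformly_continuous[OF cont]) simp
  then obtain \<delta> where \<delta>: "\<delta> > 0" "\<And>x y. x \<in> {0..t} \<Longrightarrow> y \<in> {0..t} \<Longrightarrow> dist y x < \<delta> \<Longrightarrow> dist (\<Phi> y) (\<Phi> x) < \<eta>"
    unfolding uniformly_continuous_on_def using \<open>0<\<eta>\<close> by metis
  obtain m :: nat where m: "t / \<delta> < real m" using reals_Archimedean2 by blast
  have "0 \<le> t / \<delta>" using t \<delta>(1) by simp
  with m have m0: "0 < m" by simp
  have hm: "t / real m < \<delta>" using m m0 \<delta>(1) t by (simp add: field_simps)
  define s where "s k = real k * t / real m" for k :: nat
  define D where "D = d + c * \<eta>"
  have D: "0 \<le> D" using d c \<open>0<\<eta>\<close> by (simp add: D_def)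
  have s0: "s 0 = 0" by (simp add: s_def)
  have sm: "s m = t" using m0 by (simp add: s_def)
  have srange: "k \<le> m \<Longrightarrow> 0 \<le> s k \<and> s k \<le> t" for k
    using t m0 by (auto simp: s_def field_simps mult_left_mono)
  have sinc: "s k \<le> s (Suc k)" for k using t m0 by (simp add: s_def field_simps)
  have sdiff: "s (Suc k) - s k = t / real m" for k
    by (simp add: s_def diff_divide_distrib[symmetric] algebra_simps)
  have claim: "k \<le> m \<Longrightarrow> \<Phi> (s k) \<le> exp (c * A (s k)) * (\<Phi> 0 + D * A (s k))" for k
  proof (induction k)
    case 0 then show ?case using s0 A0 by simp
  next
    case (Suc k)
    have k: "k \<le> m" using Suc.prems by simp
    note IH = Suc.IH[OF k]
    have r1: "0 \<le> s k" "s k \<le> t" using srange[OF k] by auto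
    have r2: "0 \<le> s (Suc k)" "s (Suc k) \<le> t" using srange[OF Suc.prems] by auto
    have bound: "\<forall>r\<in>{s k..s (Suc k)}. \<Phi> r \<le> \<Phi> (s k) + \<eta>"
    proof
      fix r assume r: "r \<in> {s k..s (Suc k)}"
      have "dist r (s k) < \<delta>" using r sdiff[of k] hm by (simp add: dist_real_def)
      then have "dist (\<Phi> r) (\<Phi> (s k)) < \<eta>" using \<delta>(2)[of "s k" r] r r1 r2 by auto
      then show "\<Phi> r \<le> \<Phi> (s k) + \<eta>" by (simp add: dist_real_def)
    qed
    define b where "b = A (s (Suc k)) - A (s k)"
    have b: "0 \<le> b" using mono[OF r1(1) sinc[of k] r2(2)] by (simp add: b_def)
    have "\<Phi> (s (Suc k)) - \<Phi> (s k) \<le> b * (c * (\<Phi> (s k) + \<eta>) + d)"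
      using stp[OF r1(1) sinc[of k] r2(2) bound] by (simp add: b_def)
    then have st: "\<Phi> (s (Suc k)) \<le> \<Phi> (s k) * (1 + c*b) + b * D"
      by (simp add: D_def algebra_simps)
    define E where "E = exp (c * A (s k))"
    define X where "X = \<Phi> 0 + D * A (s k)"
    have Ak: "0 \<le> A (s k)" using mono[OF _ r1(1) r1(2)] A0 by simp
    have X: "0 \<le> X" using nn[of 0] t Ak D by (simp add: X_def)
    have E1: "exp (c * A (s (Suc k))) = E * exp (c*b)"
      by (simp add: E_def b_def algebra_simps flip: exp_add)
    have Eb: "1 + c*b \<le> exp (c*b)" by (rule exp_ge_add_one_self)
    have Epos: "0 < E" by (simp add: E_def)
    have E1ge: "1 \<le> exp (c * A (s (Suc k)))"
      using mono[OF _ r2(1) r2(2)] A0 c by simp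
    have "\<Phi> (s k) * (1 + c*b) \<le> E * X * (1 + c*b)"
      using IH b c by (intro mult_right_mono) (auto simp: E_def X_def)
    then have "\<Phi> (s (Suc k)) \<le> E * X * (1 + c*b) + b * D"
      using st by linarith
    also have "E * X * (1 + c*b) \<le> E * X * exp (c*b)"
      using Eb Epos X by (intro mult_left_mono) auto
    also have "b * D \<le> exp (c * A (s (Suc k))) * (b * D)"
      using mult_right_mono[OF E1ge, of "b*D"] b D by simp
    finally show ?case
      by (simp add: E1 X_def b_def algebra_simps)
  qed
  have "\<Phi> t \<le> exp (c * A t) * (\<Phi> 0 + D * A t)" using claim[of m] sm by simp
  then show "\<Phi> t \<le> exp (c * A t) * (\<Phi> 0 + d * A t) + \<eta> * (exp (c * A t) * (c * A t))"
    by (simp add: D_def algebra_simps)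
qed

lemma line_deriv:
  fixes f :: "'a::real_normed_vector \<Rightarrow> real" and D :: "'a \<Rightarrow> real"
  assumes "(f has_derivative D) (at (c + s *\<^sub>R h))"
  shows "((\<lambda>s. f (c + s *\<^sub>R h)) has_real_derivative D h) (at s)"
proof -
  have lin: "linear D" by (rule has_derivative_linear[OF assms])
  have l: "((\<lambda>s. c + s *\<^sub>R h) has_derivative (\<lambda>s. s *\<^sub>R h)) (at s)"
    by (auto intro!: derivative_eq_intros)
  have "((\<lambda>s. f (c + s *\<^sub>R h)) has_derivative (\<lambda>s. D (s *\<^sub>R h))) (at s)"
    by (rule has_derivative_compose[OF l assms])
  then show ?thesis unfolding has_field_derivative_def
    by (rule has_derivative_eq_rhs) (auto simp: fun_eq_iff linear_cmul[OF lin])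
qed

lemma sq_mvt:
  fixes f :: "'a::real_normed_vector \<Rightarrow> real"
  assumes df: "\<And>q. q \<in> U \<Longrightarrow> (f has_derivative blinfun_apply (Df q)) (at q)"
    and d2f: "\<And>q. q \<in> U \<Longrightarrow> (Df has_derivative blinfun_apply (D2f q)) (at q)"
    and sq: "\<And>\<sigma> \<tau>. 0 \<le> \<sigma> \<Longrightarrow> \<sigma> \<le> \<rho> \<Longrightarrow> 0 \<le> \<tau> \<Longrightarrow> \<tau> \<le> \<rho> \<Longrightarrow> p + \<sigma> *\<^sub>R h + \<tau> *\<^sub>R k \<in> U"
    and \<rho>: "0 < \<rho>"
  shows "\<exists>\<sigma> \<tau>. 0 \<le> \<sigma> \<and> \<sigma> \<le> \<rho> \<and> 0 \<le> \<tau> \<and> \<tau> \<le> \<rho> \<and>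
     f (p + \<rho> *\<^sub>R h + \<rho> *\<^sub>R k) - f (p + \<rho> *\<^sub>R h) - f (p + \<rho> *\<^sub>R k) + f p
       = \<rho>^2 * D2f (p + \<sigma> *\<^sub>R h + \<tau> *\<^sub>R k) k h"
proof -
  define g where "g \<sigma> = f (p + \<rho> *\<^sub>R k + \<sigma> *\<^sub>R h) - f (p + \<sigma> *\<^sub>R h)" for \<sigma>
  have "\<exists>z. 0 < z \<and> z < \<rho> \<and> g \<rho> - g 0 = (\<rho> - 0) * (Df (p + \<rho> *\<^sub>R k + z *\<^sub>R h) h - Df (p + z *\<^sub>R h) h)"
  proof (rule MVT2[OF \<rho>])
    fix x assume x: "0 \<le> x" "x \<le> \<rho>"
    have u1: "p + \<rho> *\<^sub>R k + x *\<^sub>R h \<in> U" using sq[of x \<rho>] x \<rho> by (simp add: algebra_simps)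
    have u2: "p + x *\<^sub>R h \<in> U" using sq[of x 0] x \<rho> by simp
    show "(g has_real_derivative (Df (p + \<rho> *\<^sub>R k + x *\<^sub>R h) h - Df (p + x *\<^sub>R h) h)) (at x)"
      unfolding g_def[abs_def]
      by (intro DERIV_diff line_deriv df u1 u2)
  qed
  then obtain \<sigma> where \<sigma>: "0 < \<sigma>" "\<sigma> < \<rho>"
    and g: "g \<rho> - g 0 = \<rho> * (Df (p + \<rho> *\<^sub>R k + \<sigma> *\<^sub>R h) h - Df (p + \<sigma> *\<^sub>R h) h)" by auto
  define m where "m \<tau> = Df (p + \<sigma> *\<^sub>R h + \<tau> *\<^sub>R k) h" for \<tau>
  have "\<exists>z. 0 < z \<and> z < \<rho> \<and> m \<rho> - m 0 = (\<rho> - 0) * D2f (p + \<sigma> *\<^sub>R h + z *\<^sub>R k) k h"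
  proof (rule MVT2[OF \<rho>])
    fix x assume x: "0 \<le> x" "x \<le> \<rho>"
    have u: "p + \<sigma> *\<^sub>R h + x *\<^sub>R k \<in> U" using sq[of \<sigma> x] x \<sigma> by simp
    have l: "((\<lambda>s. p + \<sigma> *\<^sub>R h + s *\<^sub>R k) has_derivative (\<lambda>s. s *\<^sub>R k)) (at x)"
      by (auto intro!: derivative_eq_intros)
    have "((\<lambda>s. Df (p + \<sigma> *\<^sub>R h + s *\<^sub>R k)) has_derivative (\<lambda>s. D2f (p + \<sigma> *\<^sub>R h + x *\<^sub>R k) (s *\<^sub>R k))) (at x)"
      by (rule has_derivative_compose[OF l d2f[OF u]])
    then have "((\<lambda>s. Df (p + \<sigma> *\<^sub>R h + s *\<^sub>R k) h) has_derivative
        (\<lambda>s. Df (p + \<sigma> *\<^sub>R h + x *\<^sub>R k) 0 + D2f (p + \<sigma> *\<^sub>R h + x *\<^sub>R k) (s *\<^sub>R k) h)) (at x)"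
      by (intro blinfun.FDERIV) (auto intro!: derivative_eq_intros)
    then show "(m has_real_derivative D2f (p + \<sigma> *\<^sub>R h + x *\<^sub>R k) k h) (at x)"
      unfolding m_def[abs_def] has_field_derivative_def
      by (rule has_derivative_eq_rhs) (auto simp: fun_eq_iff blinfun.scaleR_right blinfun.scaleR_left)
  qed
  then obtain \<tau> where \<tau>: "0 < \<tau>" "\<tau> < \<rho>"
    and m: "m \<rho> - m 0 = \<rho> * D2f (p + \<sigma> *\<^sub>R h + \<tau> *\<^sub>R k) k h" by auto
  have "f (p + \<rho> *\<^sub>R h + \<rho> *\<^sub>R k) - f (p + \<rho> *\<^sub>R h) - f (p + \<rho> *\<^sub>R k) + f p = g \<rho> - g 0"
    by (simp add: g_def algebra_simps)
  also have "\<dots> = \<rho> * (m \<rho> - m 0)" unfolding g m_def by (simp add: algebra_simps)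
  also have "\<dots> = \<rho>^2 * D2f (p + \<sigma> *\<^sub>R h + \<tau> *\<^sub>R k) k h" unfolding m by (simp add: power2_eq_square)
  finally show ?thesis using \<sigma> \<tau> by (intro exI[of _ \<sigma>] exI[of _ \<tau>]) auto
qed

lemma blinfun2_diff_bound:
  fixes B C :: "'a::real_normed_vector \<Rightarrow>\<^sub>L ('a \<Rightarrow>\<^sub>L real)"
  shows "\<bar>B k h - C k h\<bar> \<le> norm (B - C) * norm k * norm h"
proof -
  have "B k h - C k h = (B - C) k h" by (simp add: blinfun.diff_left)
  also have "\<bar>\<dots>\<bar> \<le> norm ((B - C) k) * norm h" using norm_blinfun[of "(B - C) k" h] by simp
  also have "\<dots> \<le> norm (B - C) * norm k * norm h"
    by (intro mult_right_mono norm_blinfun) auto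
  finally show ?thesis .
qed

lemma sym_open:
  fixes f :: "'a::real_normed_vector \<Rightarrow> real"
  assumes U: "open U"
    and df: "\<And>q. q \<in> U \<Longrightarrow> (f has_derivative blinfun_apply (Df q)) (at q)"
    and d2f: "\<And>q. q \<in> U \<Longrightarrow> (Df has_derivative blinfun_apply (D2f q)) (at q)"
    and cont: "continuous_on U D2f" and p: "p \<in> U"
  shows "D2f p k h = D2f p h k"
proof -
  have "\<bar>D2f p k h - D2f p h k\<bar> \<le> 0"
  proof (rule eps_le)
    show "0 \<le> 2 * norm k * norm h" by simp
    fix e :: real assume e: "0 < e"
    obtain d where d: "d > 0" "\<And>q. q \<in> U \<Longrightarrow> dist q p < d \<Longrightarrow> dist (D2f q) (D2f p) < e"
      using cont p e unfolding continuous_on_iff by metis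
    obtain r where r: "r > 0" "ball p r \<subseteq> U" using U p open_contains_ball by blast
    define \<rho> where "\<rho> = min d r / (2 * (norm h + norm k + 1))"
    have "0 < norm h + norm k + 1" by (smt (verit) norm_ge_zero)
    then have \<rho>: "0 < \<rho>" using d r by (simp add: \<rho>_def)
    have near: "norm (\<sigma> *\<^sub>R a + \<tau> *\<^sub>R b) < min d r" if "0 \<le> \<sigma>" "\<sigma> \<le> \<rho>" "0 \<le> \<tau>" "\<tau> \<le> \<rho>"
       "norm a + norm b = norm h + norm k" for \<sigma> \<tau> a b
    proof -
      have "norm (\<sigma> *\<^sub>R a + \<tau> *\<^sub>R b) \<le> \<sigma> * norm a + \<tau> * norm b"
        using norm_triangle_ineq[of "\<sigma> *\<^sub>R a" "\<tau> *\<^sub>R b"] that by simp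
      also have "\<dots> \<le> \<rho> * norm a + \<rho> * norm b"
        using that by (intro add_mono mult_right_mono) auto
      also have "\<dots> = \<rho> * (norm h + norm k)" using that(5) by (metis distrib_left)
      also have "\<dots> < min d r"
      proof -
        have "\<rho> * (norm h + norm k) < \<rho> * (2 * (norm h + norm k + 1))"
        proof -
          have pos: "norm h + norm k < 2 * (norm h + norm k + 1)" by (smt (verit) norm_ge_zero)
          show ?thesis by (rule mult_strict_left_mono[OF pos \<rho>])
        qed
        also have "\<dots> = min d r" using d r \<open>0 < norm h + norm k + 1\<close> by (simp add: \<rho>_def)
        finally show ?thesis .
      qed
      finally show ?thesis .
    qed
    have inU: "p + \<sigma> *\<^sub>R a + \<tau> *\<^sub>R b \<in> U \<and> dist (p + \<sigma> *\<^sub>R a + \<tau> *\<^sub>R b) p < d"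
      if "0 \<le> \<sigma>" "\<sigma> \<le> \<rho>" "0 \<le> \<tau>" "\<tau> \<le> \<rho>" "norm a + norm b = norm h + norm k" for \<sigma> \<tau> a b
    proof -
      have n: "norm (\<sigma> *\<^sub>R a + \<tau> *\<^sub>R b) < min d r" by (rule near[OF that])
      have "dist (p + \<sigma> *\<^sub>R a + \<tau> *\<^sub>R b) p = norm (\<sigma> *\<^sub>R a + \<tau> *\<^sub>R b)"
        by (simp add: dist_norm algebra_simps)
      with n r show ?thesis by (auto simp: dist_commute subset_eq)
    qed
    obtain \<sigma>1 \<tau>1 where s1: "0 \<le> \<sigma>1" "\<sigma>1 \<le> \<rho>" "0 \<le> \<tau>1" "\<tau>1 \<le> \<rho>"
      and e1: "f (p + \<rho> *\<^sub>R h + \<rho> *\<^sub>R k) - f (p + \<rho> *\<^sub>R h) - f (p + \<rho> *\<^sub>R k) + f p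
       = \<rho>^2 * D2f (p + \<sigma>1 *\<^sub>R h + \<tau>1 *\<^sub>R k) k h"
      using sq_mvt[of U f Df D2f \<rho> p h k] df d2f \<rho> inU[of _ _ h k] by blast
    obtain \<sigma>2 \<tau>2 where s2: "0 \<le> \<sigma>2" "\<sigma>2 \<le> \<rho>" "0 \<le> \<tau>2" "\<tau>2 \<le> \<rho>"
      and e2: "f (p + \<rho> *\<^sub>R k + \<rho> *\<^sub>R h) - f (p + \<rho> *\<^sub>R k) - f (p + \<rho> *\<^sub>R h) + f p
       = \<rho>^2 * D2f (p + \<sigma>2 *\<^sub>R k + \<tau>2 *\<^sub>R h) h k"
      using sq_mvt[of U f Df D2f \<rho> p k h] df d2f \<rho> inU[of _ _ k h] by (auto simp: add.commute)
    define q1 where "q1 = p + \<sigma>1 *\<^sub>R h + \<tau>1 *\<^sub>R k"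
    define q2 where "q2 = p + \<sigma>2 *\<^sub>R k + \<tau>2 *\<^sub>R h"
    have q1: "q1 \<in> U" "dist q1 p < d" using inU[OF s1, of h k] by (auto simp: q1_def)
    have q2: "q2 \<in> U" "dist q2 p < d" using inU[OF s2, of k h] by (auto simp: q2_def add.commute)
    have "\<rho>^2 * D2f q1 k h = \<rho>^2 * D2f q2 h k"
      using e1 e2 by (simp add: q1_def q2_def algebra_simps)
    then have eq: "D2f q1 k h = D2f q2 h k" using \<rho> by simp
    have b1: "\<bar>D2f p k h - D2f q1 k h\<bar> \<le> e * norm k * norm h"
    proof -
      have "\<bar>D2f p k h - D2f q1 k h\<bar> \<le> norm (D2f p - D2f q1) * norm k * norm h"
        by (rule blinfun2_diff_bound)
      also have "\<dots> \<le> e * norm k * norm h"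
        using d(2)[OF q1] by (intro mult_right_mono) (auto simp: dist_norm norm_minus_commute)
      finally show ?thesis .
    qed
    have b2: "\<bar>D2f p h k - D2f q2 h k\<bar> \<le> e * norm h * norm k"
    proof -
      have "\<bar>D2f p h k - D2f q2 h k\<bar> \<le> norm (D2f p - D2f q2) * norm h * norm k"
        by (rule blinfun2_diff_bound)
      also have "\<dots> \<le> e * norm h * norm k"
        using d(2)[OF q2] by (intro mult_right_mono) (auto simp: dist_norm norm_minus_commute)
      finally show ?thesis .
    qed
    show "\<bar>D2f p k h - D2f p h k\<bar> \<le> 0 + e * (2 * norm k * norm h)"
      using b1 b2 eq by (simp add: algebra_simps)
  qed
  then show ?thesis by simp
qed

lemma sym_S:
  fixes u :: "real \<times> 'a::euclidean_space \<Rightarrow> real"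
    and Du :: "real \<times> 'a \<Rightarrow> ((real \<times> 'a) \<Rightarrow>\<^sub>L real)"
    and D2u :: "real \<times> 'a \<Rightarrow> ((real \<times> 'a) \<Rightarrow>\<^sub>L ((real \<times> 'a) \<Rightarrow>\<^sub>L real))"
  assumes T: "0 < T"
    and du: "has_C1_derivative_on u Du ({0..T} \<times> UNIV)"
    and d2u: "has_C1_derivative_on Du D2u ({0..T} \<times> UNIV)"
    and p: "p \<in> {0..T} \<times> UNIV"
  shows "D2u p k h = D2u p h k"
proof -
  define S where "S = ({0..T} \<times> UNIV :: (real \<times> 'a) set)"
  define U where "U = ({0<..<T} \<times> UNIV :: (real \<times> 'a) set)"
  have U: "open U" unfolding U_def by (intro open_Times) auto
  have US: "U \<subseteq> S" unfolding U_def S_def by auto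
  have atU: "at q within S = at q" if "q \<in> U" for q
    using at_within_open_subset[OF that U US] .
  have cont: "continuous_on S D2u" using d2u by (simp add: has_C1_derivative_on_def S_def)
  have zeroU: "D2u q k h - D2u q h k = 0" if "q \<in> U" for q
  proof -
    have "D2u q k h = D2u q h k"
    proof (rule sym_open[OF U _ _ _ that])
      fix q assume q: "q \<in> U"
      have qS: "q \<in> {0..T} \<times> UNIV" using q US by (auto simp: S_def)
      have "(u has_derivative blinfun_apply (Du q)) (at q within S)"
        using du qS unfolding has_C1_derivative_on_def S_def by blast
      then show "(u has_derivative blinfun_apply (Du q)) (at q)" using atU[OF q] by simp
      have "(Du has_derivative blinfun_apply (D2u q)) (at q within S)"
        using d2u qS unfolding has_C1_derivative_on_def S_def by blast
      then show "(Du has_derivative blinfun_apply (D2u q)) (at q)" using atU[OF q] by simp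
    next
      show "continuous_on U D2u" using cont US by (rule continuous_on_subset)
    qed
    then show ?thesis by simp
  qed
  have cl: "closed {q \<in> S. D2u q k h - D2u q h k = 0}"
    by (rule continuous_closed_preimage_constant)
       (auto intro!: continuous_intros cont[unfolded S_def] simp: S_def intro: closed_Times)
  have "closure U = S" unfolding U_def S_def using T by (simp add: closure_Times)
  moreover have "closure U \<subseteq> {q \<in> S. D2u q k h - D2u q h k = 0}"
    by (rule closure_minimal[OF _ cl]) (use zeroU US in auto)
  ultimately show ?thesis using p by (auto simp: S_def)
qed

lemma oslc_deriv:
  fixes a :: "real \<times> (real^'n) \<Rightarrow> real^'n"
    and Da :: "real \<times> (real^'n) \<Rightarrow> ((real \<times> (real^'n)) \<Rightarrow>\<^sub>L (real^'n))"
    and S :: "(real \<times> (real^'n)) set"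
  assumes der: "\<And>q. q \<in> S \<Longrightarrow> (a has_derivative blinfun_apply (Da q)) (at q within S)"
    and line: "\<And>y. (s, y) \<in> S"
    and osl: "\<And>x y. inner (a (s, y) - a (s, x)) (y - x) \<le> c * (norm (y - x))^2"
  shows "inner (Da (s, x) (0, v)) v \<le> c * (norm v)^2"
proof (rule ccontr)
  assume "\<not> ?thesis"
  then have pos: "0 < inner (Da (s, x) (0, v)) v - c * (norm v)^2" by simp
  define g where "g h = inner (a (s, x + h *\<^sub>R v)) v - c * (norm v)^2 * h" for h
  have l: "((\<lambda>h. (s, x + h *\<^sub>R v)) has_derivative (\<lambda>h. (0, h *\<^sub>R v))) (at 0 within UNIV)"
    by (auto intro!: derivative_eq_intros)
  have "((\<lambda>h. a (s, x + h *\<^sub>R v)) has_derivative (\<lambda>h. Da (s, x + 0 *\<^sub>R v) (0, h *\<^sub>R v))) (at 0 within UNIV)"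
    by (rule has_derivative_in_compose2[OF der _ _ l]) (use line in auto)
  then have "((\<lambda>h. a (s, x + h *\<^sub>R v)) has_derivative (\<lambda>h. h *\<^sub>R Da (s, x) (0, v))) (at 0)"
    by (rule has_derivative_eq_rhs) (auto simp: fun_eq_iff blinfun.scaleR_right[symmetric])
  then have "(g has_real_derivative (inner (Da (s, x) (0, v)) v - c * (norm v)^2)) (at 0)"
    unfolding g_def[abs_def] has_field_derivative_def
    by (auto intro!: derivative_eq_intros simp: fun_eq_iff algebra_simps)
  from DERIV_pos_inc_right[OF this pos] obtain d where d: "d > 0" "\<And>h. h > 0 \<Longrightarrow> h < d \<Longrightarrow> g 0 < g (0 + h)"
    by auto
  define h where "h = d / 2"
  have h: "0 < h" "h < d" using d by (auto simp: h_def)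
  have eqx: "(x + h *\<^sub>R v) - x = h *\<^sub>R v" by simp
  have nh: "norm (h *\<^sub>R v) = h * norm v" using h by simp
  have "h * inner (a (s, x + h *\<^sub>R v) - a (s, x)) v = inner (a (s, x + h *\<^sub>R v) - a (s, x)) (h *\<^sub>R v)"
    by (rule inner_scaleR_right[symmetric])
  also have "\<dots> \<le> c * (norm (h *\<^sub>R v))^2"
    using osl[where x=x and y="x + h *\<^sub>R v"] unfolding eqx .
  also have "\<dots> = h * (c * h * (norm v)^2)" unfolding nh by (simp add: power2_eq_square)
  finally have "h * inner (a (s, x + h *\<^sub>R v) - a (s, x)) v \<le> h * (c * h * (norm v)^2)" .
  then have "inner (a (s, x + h *\<^sub>R v) - a (s, x)) v \<le> c * h * (norm v)^2"
    using h by simp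
  then have "g h \<le> g 0" by (simp add: g_def inner_diff_left algebra_simps)
  with d(2)[OF h] show False by simp
qed

lemma div_zero:
  fixes f :: "real^'n \<Rightarrow> real" and f' :: "real^'n \<Rightarrow> (real^'n) \<Rightarrow> real"
  assumes deriv: "\<And>x. (f has_derivative (f' x)) (at x)"
    and cont: "continuous_on UNIV (\<lambda>x. f' x (axis i 1))"
    and supp: "\<And>x. \<rho> \<le> norm (x - c) \<Longrightarrow> f x = 0"
  shows "integral (cbox (c - (\<chi> j. \<rho>+1)) (c + (\<chi> j. \<rho>+1))) (\<lambda>x. f' x (axis i 1)) = 0"
proof -
  define e :: "real^'n" where "e = axis i 1"
  define B where "B = cbox (c - (\<chi> j. \<rho>+1)) (c + (\<chi> j. \<rho>+1))"
  define B0 where "B0 = cbox (c - (\<chi> j. \<rho>)) (c + (\<chi> j. \<rho>))"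
  have fcont: "continuous_on UNIV f"
    using deriv by (metis continuous_at_imp_continuous_on differentiable_def differentiable_imp_continuous_within)
  have outB0: "f y = 0" if "y \<notin> B0" for y
  proof -
    have "\<not> (\<forall>j. c$j - \<rho> \<le> y$j \<and> y$j \<le> c$j + \<rho>)"
      using that unfolding B0_def mem_box_cart by simp
    then obtain j where "\<not> (c$j - \<rho> \<le> y$j \<and> y$j \<le> c$j + \<rho>)" by blast
    then have "\<rho> < \<bar>(y - c)$j\<bar>" by auto
    also have "\<dots> \<le> norm (y - c)" by (rule component_le_norm_cart)
    finally show ?thesis by (intro supp) simp
  qed
  define I0 where "I0 = integral B0 f"
  have fint: "(f has_integral I0) B0"
    unfolding I0_def B0_def by (intro integrable_integral integrable_continuous continuous_on_subset[OF fcont]) auto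
  have shift: "integral B (\<lambda>x. f (x + h *\<^sub>R e)) = I0" if h: "h \<in> {-1..1}" for h
  proof -
    have "((\<lambda>x. f (1 *\<^sub>R x + h *\<^sub>R e)) has_integral (1 / (\<bar>1\<bar> ^ DIM(real^'n))) *\<^sub>R I0)
        ((\<lambda>x. (1 / 1) *\<^sub>R x + -((1 / 1) *\<^sub>R (h *\<^sub>R e))) ` B0)"
      using fint unfolding B0_def by (intro has_integral_affinity) auto
    then have i1: "((\<lambda>x. f (x + h *\<^sub>R e)) has_integral I0) ((\<lambda>x. x - h *\<^sub>R e) ` B0)"
      by simp
    have sub: "(\<lambda>x. x - h *\<^sub>R e) ` B0 \<subseteq> B"
    proof
      fix y assume "y \<in> (\<lambda>x. x - h *\<^sub>R e) ` B0"
      then obtain x where x: "x \<in> B0" "y = x - h *\<^sub>R e" by auto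
      have "\<bar>(h *\<^sub>R e)$j\<bar> \<le> 1" for j using h by (auto simp: e_def axis_def)
      then show "y \<in> B" using x unfolding B_def B0_def mem_box_cart
        by (auto simp: algebra_simps) (smt (verit))+
    qed
    have "((\<lambda>x. f (x + h *\<^sub>R e)) has_integral I0) B"
    proof (rule has_integral_on_superset[OF i1 _ sub])
      fix x assume "x \<notin> (\<lambda>x. x - h *\<^sub>R e) ` B0"
      then have "x + h *\<^sub>R e \<notin> B0" by (metis (no_types, lifting) add_diff_cancel image_eqI)
      then show "f (x + h *\<^sub>R e) = 0" by (rule outB0)
    qed
    then show ?thesis by (rule integral_unique)
  qed
  have L: "((\<lambda>h. integral B (\<lambda>x. f (x + h *\<^sub>R e))) has_field_derivative integral B (\<lambda>x. f' (x + 0 *\<^sub>R e) e)) (at 0 within {-1..1})"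
    unfolding B_def
  proof (rule leibniz_rule_field_derivative)
    fix h x
    show "((\<lambda>h. f (x + h *\<^sub>R e)) has_field_derivative f' (x + h *\<^sub>R e) e) (at h within {-1..1})"
      by (rule has_field_derivative_at_within, rule line_deriv, rule deriv)
  next
    fix h :: real
    show "(\<lambda>x. f (x + h *\<^sub>R e)) integrable_on cbox (c - (\<chi> j. \<rho>+1)) (c + (\<chi> j. \<rho>+1))"
      by (intro integrable_continuous continuous_on_compose2[OF fcont]) (auto intro!: continuous_intros)
  next
    show "continuous_on ({-1..1} \<times> cbox (c - (\<chi> j. \<rho>+1)) (c + (\<chi> j. \<rho>+1))) (\<lambda>(h, x). f' (x + h *\<^sub>R e) e)"
    proof -
      have "continuous_on ({-1..1} \<times> cbox (c - (\<chi> j. \<rho>+1)) (c + (\<chi> j. \<rho>+1)))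
          (\<lambda>p. (\<lambda>x. f' x (axis i 1)) (snd p + fst p *\<^sub>R axis i 1))"
        by (rule continuous_on_compose2[OF cont]) (auto intro!: continuous_intros)
      then show ?thesis by (simp add: split_beta e_def)
    qed
  qed auto
  have int01: "0 \<in> interior {-1..1::real}" by simp
  have L2: "((\<lambda>h. integral B (\<lambda>x. f (x + h *\<^sub>R e))) has_field_derivative integral B (\<lambda>x. f' x e)) (at 0)"
    using L by (simp add: at_within_interior[OF int01])
  have C: "((\<lambda>h. integral B (\<lambda>x. f (x + h *\<^sub>R e))) has_field_derivative 0) (at 0)"
  proof (rule has_field_derivative_transform_within_open[of "\<lambda>h. I0" 0 0 "{-1<..<1}"])
    show "((\<lambda>h. I0) has_field_derivative 0) (at 0)" by simp
  qed (auto simp: shift)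
  from DERIV_unique[OF L2 C] show ?thesis by (simp add: B_def e_def)
qed

lemma vec_sum_axis: "(\<Sum>j\<in>UNIV. c j *\<^sub>R axis j (1::real))$k = c k"
  by (simp add: sum_component axis_def if_distrib cong: if_cong)

lemma zero_pair_sum: "(0::real, y::real^'n) = (\<Sum>i\<in>UNIV. y$i *\<^sub>R (0::real, axis i (1::real)))"
proof -
  have "(\<Sum>i\<in>UNIV. y$i *\<^sub>R (0::real, axis i (1::real))) = (0, \<Sum>i\<in>UNIV. y$i *\<^sub>R axis i 1)"
    by (simp add: prod_eq_iff fst_sum snd_sum)
  then show ?thesis by (simp flip: vec_expand)
qed

lemma lin0:
  fixes L :: "real \<times> (real^'n) \<Rightarrow> real"
  assumes "linear L"
  shows "L (0, y) = (\<Sum>i\<in>UNIV. y$i * L (0, axis i 1))"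
  by (subst zero_pair_sum) (simp only: linear_sum[OF assms] linear_cmul[OF assms] real_scaleR_def)

lemma inner_sum_axis: "inner (\<Sum>k\<in>UNIV. c k *\<^sub>R axis k (1::real)) (y::real^'n) = (\<Sum>k\<in>UNIV. c k * y$k)"
  proof -
  have "inner (\<Sum>k\<in>UNIV. c k *\<^sub>R axis k (1::real)) y = (\<Sum>k\<in>UNIV. inner (c k *\<^sub>R axis k (1::real)) y)"
    by (rule inner_sum_left)
  also have "\<dots> = (\<Sum>k\<in>UNIV. c k * y$k)"
    by (intro sum.cong refl) (simp only: inner_scaleR_left inner_axis' inner_real_def mult_1)
  finally show ?thesis .
qed

lemma blin_inner:
  fixes L :: "(real \<times> (real^'n)) \<Rightarrow>\<^sub>L real"
  shows "L (0, y) = inner (\<Sum>k\<in>UNIV. L (0, axis k 1) *\<^sub>R axis k 1) y"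
  proof -
  have lin: "linear (blinfun_apply L)" by (rule bounded_linear.linear[OF blinfun.bounded_linear_right])
  have "L (0, y) = (\<Sum>i\<in>UNIV. y$i * L (0, axis i 1))" by (rule lin0[OF lin])
  also have "\<dots> = (\<Sum>k\<in>UNIV. L (0, axis k 1) * y$k)" by (intro sum.cong refl) (rule mult.commute)
  also have "\<dots> = inner (\<Sum>k\<in>UNIV. L (0, axis k 1) *\<^sub>R axis k 1) y" by (rule inner_sum_axis[symmetric])
  finally show ?thesis .
qed

lemma key_ineq:
  fixes F w2 tr q al e N :: real
  assumes F: "F = sqrt (w2 + e^2)" and w2: "0 \<le> w2" and e: "0 < e" and al: "0 \<le> al"
    and tb: "tr * w2 - q \<le> (N - 1) * al * w2" and tN: "tr \<le> N * al"
  shows "F * tr - q / F \<le> (N - 1) * al * F + al * e"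
proof -
  have F2: "F^2 = w2 + e^2" using F w2 by simp
  have Fe: "e \<le> F" using F w2 e by (simp add: real_le_rsqrt)
  have Fpos: "0 < F" using Fe e by simp
  have "(F * tr - q / F) * F = F^2 * tr - q" using Fpos by (simp add: field_simps power2_eq_square)
  also have "\<dots> = e^2 * tr + (tr * w2 - q)" using F2 by (simp add: algebra_simps)
  also have "\<dots> \<le> e^2 * (N * al) + (N - 1) * al * w2"
    using tb tN by (intro add_mono mult_left_mono) auto
  also have "\<dots> = (N - 1) * al * F^2 + al * e^2" using F2 by (simp add: algebra_simps)
  also have "\<dots> \<le> (N - 1) * al * F^2 + al * e * F"
  proof -
    have "al * e^2 \<le> al * (e * F)" using Fe e al by (intro mult_left_mono) (auto simp: power2_eq_square)
    then show ?thesis by (simp add: algebra_simps)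
  qed
  also have "\<dots> = ((N - 1) * al * F + al * e) * F" by (simp add: algebra_simps power2_eq_square)
  finally show ?thesis using Fpos by (simp add: mult_le_cancel_right)
qed

lemma transport_deriv:
  fixes a :: "real \<times> (real^'n) \<Rightarrow> real^'n"
    and Da :: "real \<times> (real^'n) \<Rightarrow> ((real \<times> (real^'n)) \<Rightarrow>\<^sub>L (real^'n))"
    and Du :: "real \<times> (real^'n) \<Rightarrow> ((real \<times> (real^'n)) \<Rightarrow>\<^sub>L real)"
    and D2u :: "real \<times> (real^'n) \<Rightarrow> ((real \<times> (real^'n)) \<Rightarrow>\<^sub>L ((real \<times> (real^'n)) \<Rightarrow>\<^sub>L real))"
  assumes ha: "\<And>q. q \<in> S \<Longrightarrow> (a has_derivative blinfun_apply (Da q)) (at q within S)"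
    and hu: "\<And>q. q \<in> S \<Longrightarrow> (Du has_derivative blinfun_apply (D2u q)) (at q within S)"
    and tr: "\<And>q. q \<in> S \<Longrightarrow> Du q (1, a q) = 0"
    and line: "\<And>y. (s, y) \<in> S"
  shows "D2u (s, x) (0, y) (1, a (s, x)) + Du (s, x) (0, Da (s, x) (0, y)) = 0"
proof -
  have l: "((\<lambda>x'. (s, x')) has_derivative (\<lambda>y. (0, y))) (at x within UNIV)"
    by (auto intro!: derivative_eq_intros)
  have img: "(\<lambda>x'. (s, x')) ` UNIV \<subseteq> S" using line by blast
  have h1: "((\<lambda>x'. Du (s, x')) has_derivative (\<lambda>y. D2u (s, x) (0, y))) (at x within UNIV)"
    by (rule has_derivative_in_compose2[OF hu img _ l]) auto
  have h2: "((\<lambda>x'. a (s, x')) has_derivative (\<lambda>y. Da (s, x) (0, y))) (at x within UNIV)"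
    by (rule has_derivative_in_compose2[OF ha img _ l]) auto
  have h0: "((\<lambda>x'. 1::real) has_derivative (\<lambda>y. 0)) (at x within UNIV)"
    by (rule has_derivative_const)
  have h3: "((\<lambda>x'. (1::real, a (s, x'))) has_derivative (\<lambda>y. (0, Da (s, x) (0, y)))) (at x within UNIV)"
    by (rule has_derivative_Pair[OF h0 h2])
  have h4: "((\<lambda>x'. Du (s, x') (1, a (s, x'))) has_derivative
      (\<lambda>y. Du (s, x) (0, Da (s, x) (0, y)) + D2u (s, x) (0, y) (1, a (s, x)))) (at x within UNIV)"
    by (rule blinfun.FDERIV[OF h1 h3])
  have fz: "(\<lambda>x'. Du (s, x') (1, a (s, x'))) = (\<lambda>x'. 0)"
  proof
    fix x' show "Du (s, x') (1, a (s, x')) = 0" by (rule tr[OF line])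
  qed
  have h5: "((\<lambda>x'. Du (s, x') (1, a (s, x'))) has_derivative (\<lambda>y. 0)) (at x within UNIV)"
    unfolding fz by (rule has_derivative_const)
  have "(\<lambda>y. Du (s, x) (0, Da (s, x) (0, y)) + D2u (s, x) (0, y) (1, a (s, x))) = (\<lambda>y. 0)"
    by (rule has_derivative_unique[OF h4 h5])
  then have "Du (s, x) (0, Da (s, x) (0, y)) + D2u (s, x) (0, y) (1, a (s, x)) = 0" by (rule fun_cong)
  then show ?thesis by (simp only: add.commute)
qed

lemma integral_nonneg_ae:
  fixes f :: "real \<Rightarrow> real"
  assumes "negligible E" "\<And>x. x \<in> {a..b} - E \<Longrightarrow> 0 \<le> f x" "f integrable_on {a..b}"
  shows "0 \<le> integral {a..b} f"
proof -
  have "integral {a..b} f = integral {a..b} (\<lambda>x. if x \<in> E then 0 else f x)"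
    by (rule integral_spike[OF assms(1)]) auto
  also have "0 \<le> \<dots>"
  proof (rule integral_nonneg)
    show "(\<lambda>x. if x \<in> E then 0 else f x) integrable_on {a..b}"
      by (rule integrable_spike[OF assms(3) assms(1)]) auto
  qed (use assms(2) in auto)
  finally show ?thesis .
qed

definition gradx :: "(real \<times> (real^'n) \<Rightarrow> ((real \<times> (real^'n)) \<Rightarrow>\<^sub>L real)) \<Rightarrow> real \<times> (real^'n) \<Rightarrow> real^'n"
  where "gradx Du p = (\<Sum>k\<in>UNIV. Du p (0, axis k 1) *\<^sub>R axis k 1)"

lemma gradx_nth: "gradx Du p $ k = Du p (0, axis k 1)"
  unfolding gradx_def by (rule vec_sum_axis)

lemma int_ball:
  fixes f :: "real^'n \<Rightarrow> real"
  assumes "continuous_on (cball c r) f"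
  shows "f integrable_on ball c r" "(LINT x : ball c r | lborel. f x) = integral (ball c r) f"
proof -
  have "set_integrable lborel (cball c r) f"
    unfolding set_integrable_def by (rule borel_integrable_compact[OF compact_cball assms])
  then have si: "set_integrable lborel (ball c r) f"
    by (rule set_integrable_subset) auto
  show "f integrable_on ball c r" "(LINT x : ball c r | lborel. f x) = integral (ball c r) f"
    using set_borel_integral_eq_integral[OF si] by auto
qed

lemma sqrt_sum_le: "0 \<le> w \<Longrightarrow> 0 \<le> e \<Longrightarrow> sqrt (w^2 + e^2) \<le> w + e"
  by (rule real_le_lsqrt) (auto simp: power2_eq_square algebra_simps)

lemma core:
  fixes T t M R \<eta> \<epsilon> :: real and x0 :: "real^'n"
    and a :: "real \<times> (real^'n) \<Rightarrow> real^'n"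
    and Da :: "real \<times> (real^'n) \<Rightarrow> ((real \<times> (real^'n)) \<Rightarrow>\<^sub>L (real^'n))"
    and u :: "real \<times> (real^'n) \<Rightarrow> real"
    and Du :: "real \<times> (real^'n) \<Rightarrow> ((real \<times> (real^'n)) \<Rightarrow>\<^sub>L real)"
    and D2u :: "real \<times> (real^'n) \<Rightarrow> ((real \<times> (real^'n)) \<Rightarrow>\<^sub>L ((real \<times> (real^'n)) \<Rightarrow>\<^sub>L real))"
    and \<alpha> :: "real \<Rightarrow> real" and E :: "real set"
  assumes T: "0 < T" and t: "0 \<le> t" "t \<le> T"
    and hDa: "has_C1_derivative_on a Da ({0..T} \<times> UNIV)"
    and hu: "has_C1_derivative_on u Du ({0..T} \<times> UNIV)"
    and hu2: "has_C1_derivative_on Du D2u ({0..T} \<times> UNIV)"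
    and tr: "\<And>q. q \<in> {0..T} \<times> UNIV \<Longrightarrow> Du q (1, a q) = 0"
    and aM: "\<And>q. q \<in> {0..T} \<times> UNIV \<Longrightarrow> norm (a q) \<le> M"
    and E: "negligible E"
    and good: "\<And>s. s \<in> {0..T} - E \<Longrightarrow> 0 \<le> \<alpha> s \<and> (\<forall>x y. inner (a (s, y) - a (s, x)) (y - x) \<le> \<alpha> s * (norm (y - x))^2)"
    and aint: "\<alpha> integrable_on {0..T}"
    and R: "0 < \<eta>" "\<eta> < R" and \<epsilon>: "0 < \<epsilon>"
  shows "integral (ball x0 (R - \<eta>)) (\<lambda>x. norm (gradx Du (t, x)))
     \<le> exp ((real CARD('n) - 1) * integral {0..t} \<alpha>) *
        (integral (ball x0 (R + t * M)) (\<lambda>x. norm (gradx Du (0, x)))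
          + \<epsilon> * (measure lborel (cbox (x0 - (\<chi> j. R + t * M + 1)) (x0 + (\<chi> j. R + t * M + 1))) * (1 + integral {0..t} \<alpha>)))"
proof -
  define S where "S = {0..T} \<times> (UNIV :: (real^'n) set)"
  define N where "N = real CARD('n)"
  define A where "A s = integral {0..s} \<alpha>" for s
  define \<rho> where "\<rho> = R + t * M"
  define K where "K = cbox (x0 - (\<chi> j. \<rho> + 1)) (x0 + (\<chi> j. \<rho> + 1))"
  define \<delta> where "\<delta> = R^2 - (R - \<eta>)^2"
  define hh where "hh = \<delta> / 2"
  define r where "r s = R + (t - s) * M" for s
  define z where "z p = inner (snd p - x0) (snd p - x0) - (r (fst p))^2" for p :: "real \<times> (real^'n)"
  define Dz where "Dz p v = 2 * inner (snd p - x0) (snd v) + 2 * r (fst p) * M * fst v"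
    for p v :: "real \<times> (real^'n)"
  define \<psi> where "\<psi> p = step hh (- z p)" for p
  define D\<psi> where "D\<psi> p v = dstep hh (- z p) * (- Dz p v)" for p v
  define W where "W = gradx Du"
  define DW where "DW p v = (\<Sum>k\<in>UNIV. D2u p v (0, axis k 1) *\<^sub>R axis k (1::real))" for p v
  define F where "F p = sqrt (inner (W p) (W p) + \<epsilon>^2)" for p
  define DF where "DF p v = inner (W p) (DW p v) / F p" for p v
  define G where "G p = \<psi> p * F p" for p
  define DG where "DG p v = D\<psi> p v * F p + \<psi> p * DF p v" for p v
  have M0: "0 \<le> M" using aM[of "(0, x0)"] T by (smt (verit) norm_ge_zero atLeastAtMost_iff mem_Sigma_iff UNIV_I)
  have \<delta>: "0 < \<delta>" using R by (simp add: \<delta>_def power2_eq_square algebra_simps)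
  have hh: "0 < hh" using \<delta> by (simp add: hh_def)
  have N1: "1 \<le> N" by (simp add: N_def)
  have \<rho>: "R \<le> \<rho>" using t M0 by (simp add: \<rho>_def)
  have rbounds: "R \<le> r s \<and> r s \<le> \<rho>" if "s \<in> {0..t}" for s
    using that t M0 by (auto simp: r_def \<rho>_def mult_right_mono mult_nonneg_nonneg)
  have pS: "(s, x) \<in> S" if "s \<in> {0..T}" for s x using that by (simp add: S_def)

  have dDu: "(Du has_derivative blinfun_apply (D2u p)) (at p within S)" if "p \<in> S" for p
    using hu2 that unfolding has_C1_derivative_on_def S_def by blast
  have da: "(a has_derivative blinfun_apply (Da p)) (at p within S)" if "p \<in> S" for p
    using hDa that unfolding has_C1_derivative_on_def S_def by blast
  have cDu: "continuous_on S Du" using hu by (simp add: has_C1_derivative_on_def S_def)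
  have cD2u: "continuous_on S D2u" using hu2 by (simp add: has_C1_derivative_on_def S_def)
  have cDa: "continuous_on S Da" using hDa by (simp add: has_C1_derivative_on_def S_def)
  have ca: "continuous_on S a"
    using da by (meson continuous_on_eq_continuous_within has_derivative_continuous)
  have dW: "(W has_derivative DW p) (at p within S)" if "p \<in> S" for p
  proof -
    have "((\<lambda>p. \<Sum>k\<in>UNIV. Du p (0, axis k 1) *\<^sub>R axis k (1::real)) has_derivative
        (\<lambda>v. \<Sum>k\<in>UNIV. D2u p v (0, axis k 1) *\<^sub>R axis k (1::real))) (at p within S)"
    proof (rule has_derivative_sum)
      fix k :: 'n
      have "((\<lambda>p. Du p (0, axis k 1)) has_derivative (\<lambda>v. Du p 0 + D2u p v (0, axis k 1))) (at p within S)"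
        by (rule blinfun.FDERIV[OF dDu[OF that] has_derivative_const])
      then have "((\<lambda>p. Du p (0, axis k 1)) has_derivative (\<lambda>v. D2u p v (0, axis k 1))) (at p within S)"
        by simp
      from has_derivative_scaleR[OF this has_derivative_const[of "axis k (1::real)"]]
      show "((\<lambda>p. Du p (0, axis k 1) *\<^sub>R axis k (1::real)) has_derivative (\<lambda>v. D2u p v (0, axis k 1) *\<^sub>R axis k (1::real))) (at p within S)"
        by (rule has_derivative_eq_rhs) (simp add: fun_eq_iff)
    qed
    then show ?thesis unfolding W_def gradx_def[abs_def]
      by (rule has_derivative_eq_rhs) (simp add: fun_eq_iff DW_def)
  qed
  have Fpos: "\<epsilon> \<le> F p" for p
    unfolding F_def by (rule real_le_rsqrt) (simp add: inner_ge_zero)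
  have Fpos': "0 < F p" for p using Fpos[of p] \<epsilon> by simp
  have dF: "(F has_derivative DF p) (at p within S)" if "p \<in> S" for p
  proof -
    have X: "0 < inner (W p) (W p) + \<epsilon>^2" using \<epsilon> by (simp add: add_nonneg_pos inner_ge_zero)
    have "((\<lambda>p. inner (W p) (W p) + \<epsilon>^2) has_derivative (\<lambda>v. inner (W p) (DW p v) + inner (DW p v) (W p))) (at p within S)"
      by (auto intro!: derivative_eq_intros dW[OF that])
    from DERIV_compose_FDERIV[OF DERIV_real_sqrt[OF X] this]
    show ?thesis unfolding F_def[abs_def] DF_def[abs_def]
      by (rule has_derivative_eq_rhs) (auto simp: fun_eq_iff inner_commute field_simps F_def)
  qed
  have cstep: "continuous_on UNIV (step hh)"
    using step_deriv[OF hh] by (meson DERIV_isCont continuous_at_imp_continuous_on)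
  have dz: "(z has_derivative Dz p) (at p within S)" for p
    unfolding z_def[abs_def] Dz_def[abs_def] r_def
    by (rule has_derivative_eq_rhs) (auto intro!: derivative_eq_intros simp: fun_eq_iff inner_commute algebra_simps power2_eq_square)
  have d\<psi>: "(\<psi> has_derivative D\<psi> p) (at p within S)" for p
  proof -
    have "((\<lambda>p. - z p) has_derivative (\<lambda>v. - Dz p v)) (at p within S)"
      by (intro has_derivative_minus dz)
    from DERIV_compose_FDERIV[OF step_deriv[OF hh] this]
    show ?thesis unfolding \<psi>_def[abs_def] D\<psi>_def[abs_def]
      by (rule has_derivative_eq_rhs) (auto simp: fun_eq_iff)
  qed
  have dG: "(G has_derivative DG p) (at p within S)" if "p \<in> S" for p
    unfolding G_def[abs_def] DG_def[abs_def]
    by (rule has_derivative_eq_rhs) (auto intro!: derivative_eq_intros d\<psi> dF[OF that] simp: fun_eq_iff algebra_simps)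
  have cW: "continuous_on S W"
    unfolding W_def gradx_def[abs_def] by (intro continuous_intros cDu)
  have cDW: "continuous_on S (\<lambda>p. DW p v)" for v
    unfolding DW_def by (intro continuous_intros cD2u)
  have cF: "continuous_on S F"
    unfolding F_def[abs_def] by (intro continuous_intros cW)
  have cz: "continuous_on S z" unfolding z_def[abs_def] r_def by (intro continuous_intros)
  have cDz: "continuous_on S (\<lambda>p. Dz p v)" for v unfolding Dz_def r_def by (intro continuous_intros)
  have c\<psi>: "continuous_on S \<psi>"
    unfolding \<psi>_def[abs_def] by (intro continuous_on_compose2[OF cstep] continuous_intros cz) auto
  have cD\<psi>: "continuous_on S (\<lambda>p. D\<psi> p v)" for v
    unfolding D\<psi>_def by (intro continuous_intros continuous_on_compose2[OF continuous_dstep[OF hh]] cz cDz) auto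
  have cDF: "continuous_on S (\<lambda>p. DF p v)" for v
  proof -
    have Fne: "F p \<noteq> 0" for p using Fpos'[of p] by simp
    show ?thesis unfolding DF_def by (intro continuous_intros cW cDW cF) (simp add: Fne)
  qed
  have cG: "continuous_on S G" unfolding G_def[abs_def] by (intro continuous_intros c\<psi> cF)
  have cDG: "continuous_on S (\<lambda>p. DG p v)" for v unfolding DG_def by (intro continuous_intros cD\<psi> cF c\<psi> cDF)
  have \<psi>01: "0 \<le> \<psi> p \<and> \<psi> p \<le> 1" for p using step_bounds[OF hh] by (simp add: \<psi>_def)
  have Gnn: "0 \<le> G p" for p using \<psi>01[of p] Fpos'[of p] by (simp add: G_def)
  have zsq: "z (s, x) = (norm (x - x0))^2 - (r s)^2" for s x by (simp add: z_def power2_norm_eq_inner)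
  have supp: "\<psi> (s, x) = 0" if "\<rho> \<le> norm (x - x0)" "s \<in> {0..t}" for s x
  proof -
    have "R \<le> r s" "r s \<le> \<rho>" using rbounds[OF that(2)] by auto
    then have "(r s)^2 \<le> (norm (x - x0))^2" using R that(1) by (intro power_mono) auto
    then have "- z (s, x) \<le> 0" by (simp add: zsq)
    then show ?thesis by (simp add: \<psi>_def step_le0[OF _ hh])
  qed
  have at_t: "\<psi> (t, x) = 1" if "x \<in> ball x0 (R - \<eta>)" for x
  proof -
    have n: "norm (x - x0) < R - \<eta>" using that by (simp add: dist_norm norm_minus_commute)
    then have "(norm (x - x0))^2 < (R - \<eta>)^2" by (intro power_strict_mono) auto
    then have "2 * hh \<le> - z (t, x)" by (simp add: zsq r_def hh_def \<delta>_def)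
    then show ?thesis by (simp add: \<psi>_def step_ge[OF _ hh])
  qed
  have at_0: "\<psi> (0, x) = 0" if "x \<notin> ball x0 \<rho>" for x
  proof (rule supp)
    show "\<rho> \<le> norm (x - x0)" using that by (simp add: dist_norm norm_minus_commute)
  qed (use t in auto)
  have sign: "D\<psi> (s, x) (1, a (s, x)) \<le> 0" if s: "s \<in> {0..t}" for s x
  proof (cases "dstep hh (- z (s, x)) = 0")
    case True then show ?thesis by (simp add: D\<psi>_def)
  next
    case False
    then have "\<not> (- z (s, x) \<le> 0 \<or> 2*hh \<le> - z (s, x))" using dstep_zero[OF hh] by blast
    then have "(norm (x - x0))^2 < (r s)^2" by (simp add: zsq)
    moreover have r0: "0 \<le> r s" using rbounds[OF s] R by simp
    ultimately have nr: "norm (x - x0) < r s" by (rule power2_less_imp_less)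
    have aMs: "norm (a (s, x)) \<le> M" using aM[of "(s, x)"] s t by auto
    have "\<bar>inner (x - x0) (a (s, x))\<bar> \<le> norm (x - x0) * norm (a (s, x))" by (rule Cauchy_Schwarz_ineq2)
    also have "\<dots> \<le> r s * M" using nr aMs r0 by (intro mult_mono) auto
    finally have "0 \<le> Dz (s, x) (1, a (s, x))" by (simp add: Dz_def)
    then show ?thesis using dstep_nonneg[OF hh] by (simp add: D\<psi>_def mult_nonneg_nonpos)
  qed
  have pointwise: "DG (s, x) (1, 0) + (\<Sum>i\<in>UNIV. DG (s, x) (0, axis i 1) * a (s, x) $ i + G (s, x) * Da (s, x) (0, axis i 1) $ i)
       \<le> \<alpha> s * ((N - 1) * G (s, x) + \<epsilon>)" if s: "s \<in> {0..t} - E" for s x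
  proof -
    define p where "p = (s, x)"
    have sT: "s \<in> {0..T}" using s t by auto
    have pS: "p \<in> S" using sT by (simp add: p_def S_def)
    have line: "(s, y) \<in> S" for y using sT by (simp add: S_def)
    have g: "0 \<le> \<alpha> s" "\<forall>x y. inner (a (s, y) - a (s, x)) (y - x) \<le> \<alpha> s * (norm (y - x))^2"
      using good[of s] s t by auto
    have linDG: "linear (DG p)" by (rule has_derivative_linear[OF dG[OF pS]])
    define av where "av = a p"
    define Av where "Av v = Da p (0, v)" for v
    define trA where "trA = (\<Sum>i\<in>UNIV. inner (Av (axis i 1)) (axis i 1))"
    have linA: "linear Av"
    proof (rule linearI)
      fix x y :: "real^'n"
      have "Av (x + y) = Da p ((0, x) + (0, y))" by (simp add: Av_def)
      also have "\<dots> = Av x + Av y" unfolding Av_def by (rule blinfun.add_right)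
      finally show "Av (x + y) = Av x + Av y" .
    next
      fix c :: real and x :: "real^'n"
      have "Av (c *\<^sub>R x) = Da p (c *\<^sub>R (0, x))" by (simp add: Av_def)
      also have "\<dots> = c *\<^sub>R Av x" unfolding Av_def by (rule blinfun.scaleR_right)
      finally show "Av (c *\<^sub>R x) = c *\<^sub>R Av x" .
    qed
    have osl: "inner (Av v) v \<le> \<alpha> s * (norm v)^2" for v
      unfolding Av_def p_def
      by (rule oslc_deriv[of S a Da s "\<alpha> s" x v]) (use da line g(2) in auto)
    have tb: "trA * (norm (W p))^2 - inner (Av (W p)) (W p) \<le> (N - 1) * \<alpha> s * (norm (W p))^2"
      unfolding trA_def N_def by (rule trace_bound[OF linA osl])
    have tN: "trA \<le> N * \<alpha> s"
    proof -
      have "trA \<le> of_nat (card (UNIV :: 'n set)) * \<alpha> s"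
        unfolding trA_def
      proof (rule sum_bounded_above)
        fix i :: 'n
        show "inner (Av (axis i 1)) (axis i 1) \<le> \<alpha> s" using osl[of "axis i 1"] by simp
      qed
      then show ?thesis by (simp add: N_def)
    qed
    have e1: "(\<Sum>i\<in>UNIV. DG p (0, axis i 1) * av $ i) = DG p (0, av)"
    proof -
      have "DG p (0, av) = (\<Sum>i\<in>UNIV. av$i * DG p (0, axis i 1))" by (rule lin0[OF linDG])
      then show ?thesis by (simp add: mult.commute)
    qed
    have e2: "DG p (1, 0) + DG p (0, av) = DG p (1, av)"
      using linear_add[OF linDG, of "(1, 0)" "(0, av)"] by simp
    have e3: "(\<Sum>i\<in>UNIV. G p * Da p (0, axis i 1) $ i) = G p * trA"
      by (simp add: trA_def Av_def sum_distrib_left inner_axis)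
    have e4: "DG p (1, av) = D\<psi> p (1, av) * F p + \<psi> p * (inner (W p) (DW p (1, av)) / F p)"
      by (simp add: DG_def DF_def)
    have e5: "inner (W p) (DW p (1, av)) = D2u p (1, av) (0, W p)"
      using blin_inner[of "D2u p (1, av)" "W p"] by (simp add: DW_def inner_commute)
    have e6: "D2u p (1, av) (0, W p) = D2u p (0, W p) (1, av)"
      by (rule sym_S[OF T hu hu2]) (use pS in \<open>simp add: S_def\<close>)
    have e7: "D2u p (0, W p) (1, av) + Du p (0, Av (W p)) = 0"
      unfolding p_def av_def Av_def
      by (rule transport_deriv[of S a Da Du D2u s x "W (s, x)"]) (use da dDu tr line in \<open>auto simp: S_def\<close>)
    have e8: "Du p (0, y) = inner (W p) y" for y
      using blin_inner[of "Du p" y] by (simp add: W_def gradx_def)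
    have e9: "inner (W p) (DW p (1, av)) = - inner (Av (W p)) (W p)"
      using e5 e6 e7 e8[of "Av (W p)"] by (simp add: inner_commute)
    have Fp: "F p = sqrt ((norm (W p))^2 + \<epsilon>^2)" by (simp add: F_def power2_norm_eq_inner)
    have key: "F p * trA - inner (Av (W p)) (W p) / F p \<le> (N - 1) * \<alpha> s * F p + \<alpha> s * \<epsilon>"
      by (rule key_ineq[OF Fp _ \<epsilon> g(1) tb tN]) simp
    have "DG (s, x) (1, 0) + (\<Sum>i\<in>UNIV. DG (s, x) (0, axis i 1) * a (s, x) $ i + G (s, x) * Da (s, x) (0, axis i 1) $ i)
        = DG p (1, 0) + (\<Sum>i\<in>UNIV. DG p (0, axis i 1) * av $ i) + (\<Sum>i\<in>UNIV. G p * Da p (0, axis i 1) $ i)"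
      by (simp add: p_def av_def sum.distrib)
    also have "\<dots> = D\<psi> p (1, av) * F p + \<psi> p * (F p * trA - inner (Av (W p)) (W p) / F p)"
      unfolding e1 e3 add.assoc[symmetric] e2 e4 e9 by (simp add: G_def algebra_simps)
    also have "\<dots> \<le> \<psi> p * (F p * trA - inner (Av (W p)) (W p) / F p)"
    proof -
      have "D\<psi> p (1, av) * F p \<le> 0"
        using sign[of s x] s Fpos'[of p] by (simp add: p_def av_def mult_nonpos_nonneg)
      then show ?thesis by simp
    qed
    also have "\<dots> \<le> \<psi> p * ((N - 1) * \<alpha> s * F p + \<alpha> s * \<epsilon>)"
      using key \<psi>01[of p] by (intro mult_left_mono) auto
    also have "\<dots> = (N - 1) * \<alpha> s * G p + \<alpha> s * \<epsilon> * \<psi> p" by (simp add: G_def algebra_simps)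
    also have "\<dots> \<le> (N - 1) * \<alpha> s * G p + \<alpha> s * \<epsilon>"
      using \<psi>01[of p] g(1) \<epsilon> by (simp add: mult_left_le)
    also have "\<dots> = \<alpha> s * ((N - 1) * G (s, x) + \<epsilon>)" by (simp add: p_def algebra_simps)
    finally show ?thesis .
  qed
  define \<Phi> where "\<Phi> s = integral K (\<lambda>x. G (s, x))" for s
  define \<Phi>' where "\<Phi>' s = integral K (\<lambda>x. DG (s, x) (1, 0))" for s
  have Ksub: "{0..t} \<times> K \<subseteq> S" using t by (auto simp: S_def)
  have cxS: "(\<lambda>x. (s, x)) ` X \<subseteq> S" if "s \<in> {0..T}" for s X using that by (auto simp: S_def)
  have sT: "s \<in> {0..T}" if "s \<in> {0..t}" for s using that t by auto
  have dGs: "((\<lambda>s. G (s, x)) has_field_derivative DG (s, x) (1, 0)) (at s within {0..t})" if s: "s \<in> {0..t}" for s x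
  proof -
    have l: "((\<lambda>s. (s, x)) has_derivative (\<lambda>h. (h, 0))) (at s within {0..t})"
      by (auto intro!: derivative_eq_intros)
    have img: "(\<lambda>s. (s, x)) ` {0..t} \<subseteq> S" using t by (auto simp: S_def)
    have "((\<lambda>s. G (s, x)) has_derivative (\<lambda>h. DG (s, x) (h, 0))) (at s within {0..t})"
      by (rule has_derivative_in_compose2[OF dG img s l])
    moreover have "(\<lambda>h. DG (s, x) (h, 0)) = (\<lambda>h. DG (s, x) (1, 0) * h)"
    proof
      fix h :: real
      have lin: "linear (DG (s, x))" by (rule has_derivative_linear[OF dG]) (use sT[OF s] in \<open>simp add: S_def\<close>)
      have "DG (s, x) (h, 0) = DG (s, x) (h *\<^sub>R (1, 0))" by simp
      also have "\<dots> = h *\<^sub>R DG (s, x) (1, 0)" by (rule linear_cmul[OF lin])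
      finally show "DG (s, x) (h, 0) = DG (s, x) (1, 0) * h" by simp
    qed
    ultimately show ?thesis unfolding has_field_derivative_def by simp
  qed
  have Gint: "(\<lambda>x. G (s, x)) integrable_on K" if "s \<in> {0..T}" for s
    unfolding K_def by (intro integrable_continuous continuous_on_compose2[OF cG] continuous_intros cxS that)
  have DGint: "(\<lambda>x. DG (s, x) v) integrable_on K" if "s \<in> {0..T}" for s v
    unfolding K_def by (intro integrable_continuous continuous_on_compose2[OF cDG] continuous_intros cxS that)
  have d\<Phi>: "(\<Phi> has_field_derivative \<Phi>' s) (at s within {0..t})" if s: "s \<in> {0..t}" for s
    unfolding \<Phi>_def[abs_def] \<Phi>'_def K_def
  proof (rule leibniz_rule_field_derivative[where f="\<lambda>s x. G (s, x)" and fx="\<lambda>s x. DG (s, x) (1, 0)"])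
    show "\<And>x t'. x \<in> {0..t} \<Longrightarrow> t' \<in> cbox (x0 - (\<chi> j. \<rho> + 1)) (x0 + (\<chi> j. \<rho> + 1)) \<Longrightarrow>
      ((\<lambda>x. G (x, t')) has_field_derivative DG (x, t') (1, 0)) (at x within {0..t})"
      by (rule dGs)
    show "\<And>x. x \<in> {0..t} \<Longrightarrow> (\<lambda>t'. G (x, t')) integrable_on cbox (x0 - (\<chi> j. \<rho> + 1)) (x0 + (\<chi> j. \<rho> + 1))"
      using Gint sT unfolding K_def by blast
    have "continuous_on ({0..t} \<times> K) (\<lambda>p. DG p (1, 0))" by (rule continuous_on_subset[OF cDG Ksub])
    then show "continuous_on ({0..t} \<times> cbox (x0 - (\<chi> j. \<rho> + 1)) (x0 + (\<chi> j. \<rho> + 1))) (\<lambda>(s, x). DG (s, x) (1, 0))"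
      by (simp add: K_def case_prod_eta)
  qed (use s in auto)
  define f' where "f' s i x = DG (s, x) (0, axis i 1) * a (s, x) $ i + G (s, x) * Da (s, x) (0, axis i 1) $ i" for s i x
  have f'int: "(\<lambda>x. f' s i x) integrable_on K" if "s \<in> {0..T}" for s i
    unfolding K_def f'_def
    by (intro integrable_continuous continuous_intros continuous_on_compose2[OF cDG] continuous_on_compose2[OF cG]
        continuous_on_compose2[OF ca] continuous_on_compose2[OF cDa] cxS that)
  have divz: "integral K (f' s i) = 0" if s: "s \<in> {0..t}" for s i
  proof -
    have l: "((\<lambda>x. (s, x)) has_derivative (\<lambda>y. (0, y))) (at x within UNIV)" for x
      by (auto intro!: derivative_eq_intros)
    have img: "(\<lambda>x. (s, x)) ` UNIV \<subseteq> S" using sT[OF s] by (auto simp: S_def)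
    have "integral (cbox (x0 - (\<chi> j. \<rho> + 1)) (x0 + (\<chi> j. \<rho> + 1)))
        (\<lambda>x. (\<lambda>x y. DG (s, x) (0, y) * a (s, x) $ i + G (s, x) * Da (s, x) (0, y) $ i) x (axis i 1)) = 0"
    proof (rule div_zero[where f="\<lambda>x. G (s, x) * a (s, x) $ i" and f'="\<lambda>x y. DG (s, x) (0, y) * a (s, x) $ i + G (s, x) * Da (s, x) (0, y) $ i" and c=x0 and \<rho>=\<rho>])
      fix x :: "real^'n"
      have h1: "((\<lambda>x. G (s, x)) has_derivative (\<lambda>y. DG (s, x) (0, y))) (at x within UNIV)"
        by (rule has_derivative_in_compose2[OF dG img _ l]) auto
      have h2: "((\<lambda>x. a (s, x)) has_derivative (\<lambda>y. Da (s, x) (0, y))) (at x within UNIV)"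
        by (rule has_derivative_in_compose2[OF da img _ l]) auto
      have h3: "((\<lambda>x. a (s, x) $ i) has_derivative (\<lambda>y. Da (s, x) (0, y) $ i)) (at x within UNIV)"
        by (rule bounded_linear.has_derivative[OF bounded_linear_vec_nth h2])
      show "((\<lambda>x. G (s, x) * a (s, x) $ i) has_derivative (\<lambda>y. DG (s, x) (0, y) * a (s, x) $ i + G (s, x) * Da (s, x) (0, y) $ i)) (at x)"
        using has_derivative_mult[OF h1 h3] by (rule has_derivative_eq_rhs) (auto simp: fun_eq_iff algebra_simps)
    next
      show "continuous_on UNIV (\<lambda>x. DG (s, x) (0, axis i 1) * a (s, x) $ i + G (s, x) * Da (s, x) (0, axis i 1) $ i)"
        by (intro continuous_intros continuous_on_compose2[OF cDG] continuous_on_compose2[OF cG]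
          continuous_on_compose2[OF ca] continuous_on_compose2[OF cDa] img)
    next
      fix x :: "real^'n" assume "\<rho> \<le> norm (x - x0)"
      then show "G (s, x) * a (s, x) $ i = 0" using supp[OF _ s] by (simp add: G_def)
    qed
    then show ?thesis by (simp add: K_def f'_def[abs_def])
  qed
  have \<Phi>'bound: "\<Phi>' s \<le> \<alpha> s * ((N - 1) * \<Phi> s + \<epsilon> * measure lborel K)" if s: "s \<in> {0..t} - E" for s
  proof -
    have s': "s \<in> {0..T}" using s t by auto
    have g: "0 \<le> \<alpha> s" using good[of s] s t by auto
    have "\<Phi>' s = \<Phi>' s + (\<Sum>i\<in>UNIV. integral K (f' s i))" using divz s by simp
    also have "\<dots> = integral K (\<lambda>x. DG (s, x) (1, 0) + (\<Sum>i\<in>UNIV. f' s i x))"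
      using DGint[OF s'] f'int[OF s'] by (simp add: \<Phi>'_def integral_add integral_sum integrable_sum)
    also have "\<dots> \<le> integral K (\<lambda>x. \<alpha> s * ((N - 1) * G (s, x) + \<epsilon>))"
    proof (rule integral_le)
      show "(\<lambda>x. DG (s, x) (1, 0) + (\<Sum>i\<in>UNIV. f' s i x)) integrable_on K"
        using DGint[OF s'] f'int[OF s'] by (intro integrable_add integrable_sum) auto
      show "(\<lambda>x. \<alpha> s * ((N - 1) * G (s, x) + \<epsilon>)) integrable_on K"
        unfolding K_def by (intro integrable_continuous continuous_intros continuous_on_compose2[OF cG] cxS s')
      show "DG (s, x) (1, 0) + (\<Sum>i\<in>UNIV. f' s i x) \<le> \<alpha> s * ((N - 1) * G (s, x) + \<epsilon>)" for x
        using pointwise[OF s, of x] by (simp add: f'_def)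
    qed
    also have "\<dots> = \<alpha> s * integral K (\<lambda>x. (N - 1) * G (s, x) + \<epsilon>)"
      by (rule integral_mult_right)
    also have "integral K (\<lambda>x. (N - 1) * G (s, x) + \<epsilon>) = integral K (\<lambda>x. (N - 1) * G (s, x)) + integral K (\<lambda>x. \<epsilon>)"
    proof (rule integral_add)
      show "(\<lambda>x. (N - 1) * G (s, x)) integrable_on K"
        using integrable_on_cmult_left[OF Gint[OF s'], of "N - 1"] by simp
      show "(\<lambda>x. \<epsilon>) integrable_on K" unfolding K_def by (rule integrable_const)
    qed
    also have "integral K (\<lambda>x. (N - 1) * G (s, x)) = (N - 1) * \<Phi> s"
      unfolding \<Phi>_def by (rule integral_mult_right)
    also have "integral K (\<lambda>x. \<epsilon>) = \<epsilon> * measure lborel K"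
      unfolding K_def by simp
    finally show ?thesis .
  qed
  have aint_sub: "\<alpha> integrable_on {a..b}" if "0 \<le> a" "b \<le> T" for a b
    by (rule integrable_on_subinterval[OF aint]) (use that in auto)
  have Adiff: "A s2 - A s1 = integral {s1..s2} \<alpha>" if "0 \<le> s1" "s1 \<le> s2" "s2 \<le> t" for s1 s2
  proof -
    have "integral {0..s1} \<alpha> + integral {s1..s2} \<alpha> = integral {0..s2} \<alpha>"
    proof (rule Henstock_Kurzweil_Integration.integral_combine)
      show "\<alpha> integrable_on {0..s2}" by (rule aint_sub) (use that t in auto)
    qed (use that in auto)
    then show ?thesis by (simp add: A_def)
  qed
  have nnint: "0 \<le> integral {s1..s2} \<alpha>" if "0 \<le> s1" "s1 \<le> s2" "s2 \<le> t" for s1 s2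
  proof (rule integral_nonneg_ae[OF E])
    fix x assume "x \<in> {s1..s2} - E"
    then have "x \<in> {0..T} - E" using that t by auto
    then show "0 \<le> \<alpha> x" using good by blast
  next
    show "\<alpha> integrable_on {s1..s2}" by (rule aint_sub) (use that t in auto)
  qed
  have gron: "\<Phi> t \<le> exp ((N - 1) * A t) * (\<Phi> 0 + (\<epsilon> * measure lborel K) * A t)"
  proof (rule gronwall_discrete[OF t(1)])
    show "continuous_on {0..t} \<Phi>" by (rule DERIV_continuous_on[OF d\<Phi>])
    show "0 \<le> \<Phi> s" if "s \<in> {0..t}" for s
      unfolding \<Phi>_def by (rule integral_nonneg[OF Gint]) (use that t Gnn in auto)
    show "A s1 \<le> A s2" if "0 \<le> s1" "s1 \<le> s2" "s2 \<le> t" for s1 s2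
      using Adiff[OF that] nnint[OF that] by simp
    show "A 0 = 0" by (simp add: A_def)
    show "0 \<le> N - 1" using N1 by simp
    show "0 \<le> \<epsilon> * measure lborel K" using \<epsilon> by simp
  next
    fix s1 s2 B assume s12: "0 \<le> s1" "s1 \<le> s2" "s2 \<le> t" and B: "\<forall>r\<in>{s1..s2}. \<Phi> r \<le> B"
    define C where "C = (N - 1) * B + \<epsilon> * measure lborel K"
    have ftc: "(\<Phi>' has_integral (\<Phi> s2 - \<Phi> s1)) {s1..s2}"
    proof (rule fundamental_theorem_of_calculus[OF s12(2)])
      fix r assume r: "r \<in> {s1..s2}"
      have "(\<Phi> has_field_derivative \<Phi>' r) (at r within {0..t})" by (rule d\<Phi>) (use r s12 in auto)
      then have "(\<Phi> has_field_derivative \<Phi>' r) (at r within {s1..s2})"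
        by (rule DERIV_subset) (use s12 in auto)
      then show "(\<Phi> has_vector_derivative \<Phi>' r) (at r within {s1..s2})"
        by (simp add: has_real_derivative_iff_has_vector_derivative)
    qed
    define g where "g r = (if r \<in> E then \<Phi>' r else \<alpha> r * C)" for r
    have "((\<lambda>r. \<alpha> r * C) has_integral (integral {s1..s2} \<alpha> * C)) {s1..s2}"
      using has_integral_mult_left[OF integrable_integral[OF aint_sub[of s1 s2]], of C] s12 t by simp
    then have gint: "(g has_integral ((A s2 - A s1) * C)) {s1..s2}"
      unfolding Adiff[OF s12] by (rule has_integral_spike[OF E, rotated]) (simp add: g_def)
    have le: "\<Phi>' r \<le> g r" if r: "r \<in> {s1..s2}" for r
    proof (cases "r \<in> E")
      case True then show ?thesis by (simp add: g_def)
    next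
      case False
      then have r': "r \<in> {0..t} - E" using r s12 by auto
      have ar: "0 \<le> \<alpha> r" using good[of r] r' t by auto
      have "\<Phi>' r \<le> \<alpha> r * ((N - 1) * \<Phi> r + \<epsilon> * measure lborel K)" by (rule \<Phi>'bound[OF r'])
      also have "\<dots> \<le> \<alpha> r * C"
        unfolding C_def using B r N1 ar by (intro mult_left_mono add_right_mono) auto
      finally show ?thesis using False by (simp add: g_def)
    qed
    show "\<Phi> s2 - \<Phi> s1 \<le> (A s2 - A s1) * ((N - 1) * B + \<epsilon> * measure lborel K)"
      using has_integral_le[OF ftc gint le] by (simp add: C_def)
  qed
  have cnW: "continuous_on X (\<lambda>x. norm (W (s, x)))" if "s \<in> {0..T}" for s X
    by (intro continuous_intros continuous_on_compose2[OF cW] cxS that)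
  have ballK: "ball x0 r' \<subseteq> K" if "r' \<le> \<rho> + 1" for r'
  proof
    fix x assume x: "x \<in> ball x0 r'"
    have "\<bar>(x - x0) $ j\<bar> \<le> norm (x - x0)" for j by (rule component_le_norm_cart)
    moreover have "norm (x - x0) < \<rho> + 1" using x that by (simp add: dist_norm norm_minus_commute)
    ultimately have "\<bar>(x - x0) $ j\<bar> \<le> \<rho> + 1" for j by (meson less_imp_le order_trans)
    then have "\<bar>x $ j - x0 $ j\<bar> \<le> \<rho> + 1" for j by simp
    then show "x \<in> K" unfolding K_def mem_box_cart by (auto simp: abs_le_iff algebra_simps)
  qed
  have nWF: "norm (W p) \<le> F p" for p
    unfolding F_def by (rule real_le_rsqrt) (simp add: power2_norm_eq_inner)
  have lower: "integral (ball x0 (R - \<eta>)) (\<lambda>x. norm (W (t, x))) \<le> \<Phi> t"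
  proof -
    have bK: "ball x0 (R - \<eta>) \<subseteq> K" by (rule ballK) (use \<rho> R in auto)
    have i1: "(\<lambda>x. norm (W (t, x))) integrable_on ball x0 (R - \<eta>)" by (rule int_ball(1)[OF cnW]) (use t in auto)
    have "integral (ball x0 (R - \<eta>)) (\<lambda>x. norm (W (t, x))) = integral K (\<lambda>x. if x \<in> ball x0 (R - \<eta>) then norm (W (t, x)) else 0)"
      using integral_restrict_Int[of K "ball x0 (R - \<eta>)" "\<lambda>x. norm (W (t, x))"] bK by (simp add: Int_absorb2)
    also have "\<dots> \<le> integral K (\<lambda>x. G (t, x))"
    proof (rule integral_le)
      show "(\<lambda>x. if x \<in> ball x0 (R - \<eta>) then norm (W (t, x)) else 0) integrable_on K"
        unfolding integrable_restrict_Int using i1 bK by (simp add: Int_absorb2)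
      show "(\<lambda>x. G (t, x)) integrable_on K" by (rule Gint) (use t in auto)
      show "(if x \<in> ball x0 (R - \<eta>) then norm (W (t, x)) else 0) \<le> G (t, x)" for x
        using at_t[of x] nWF[of "(t, x)"] Gnn[of "(t, x)"] by (auto simp: G_def)
    qed
    finally show ?thesis by (simp add: \<Phi>_def)
  qed
  have upper: "\<Phi> 0 \<le> integral (ball x0 \<rho>) (\<lambda>x. norm (W (0, x))) + \<epsilon> * measure lborel K"
  proof -
    have bK: "ball x0 \<rho> \<subseteq> K" by (rule ballK) simp
    have i1: "(\<lambda>x. norm (W (0, x))) integrable_on ball x0 \<rho>" by (rule int_ball(1)[OF cnW]) (use T in auto)
    have i2: "(\<lambda>x. if x \<in> ball x0 \<rho> then norm (W (0, x)) else 0) integrable_on K"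
      unfolding integrable_restrict_Int using i1 bK by (simp add: Int_absorb2)
    have "\<Phi> 0 \<le> integral K (\<lambda>x. (if x \<in> ball x0 \<rho> then norm (W (0, x)) else 0) + \<epsilon>)"
      unfolding \<Phi>_def
    proof (rule integral_le)
      show "(\<lambda>x. G (0, x)) integrable_on K" by (rule Gint) (use T in auto)
      show "(\<lambda>x. (if x \<in> ball x0 \<rho> then norm (W (0, x)) else 0) + \<epsilon>) integrable_on K"
        using i2 by (intro integrable_add) (auto simp: K_def)
      fix x
      show "G (0, x) \<le> (if x \<in> ball x0 \<rho> then norm (W (0, x)) else 0) + \<epsilon>"
      proof (cases "x \<in> ball x0 \<rho>")
        case True
        have "G (0, x) \<le> F (0, x)" using \<psi>01[of "(0, x)"] Fpos'[of "(0, x)"] by (simp add: G_def mult_left_le_one_le)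
        also have "F (0, x) \<le> norm (W (0, x)) + \<epsilon>"
          unfolding F_def using sqrt_sum_le[of "norm (W (0, x))" \<epsilon>] \<epsilon> by (simp add: power2_norm_eq_inner)
        finally show ?thesis using True by simp
      next
        case False then show ?thesis using at_0[OF False] \<epsilon> by (simp add: G_def)
      qed
    qed
    also have "\<dots> = integral K (\<lambda>x. if x \<in> ball x0 \<rho> then norm (W (0, x)) else 0) + integral K (\<lambda>x. \<epsilon>)"
      by (rule integral_add[OF i2]) (unfold K_def, rule integrable_const)
    also have "integral K (\<lambda>x. if x \<in> ball x0 \<rho> then norm (W (0, x)) else 0) = integral (ball x0 \<rho>) (\<lambda>x. norm (W (0, x)))"
      using integral_restrict_Int[of K "ball x0 \<rho>" "\<lambda>x. norm (W (0, x))"] bK by (simp add: Int_absorb2)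
    also have "integral K (\<lambda>x. \<epsilon>) = \<epsilon> * measure lborel K" by (simp add: K_def)
    finally show ?thesis .
  qed
  have At: "0 \<le> A t" using nnint[of 0 t] t by (simp add: A_def)
  have "integral (ball x0 (R - \<eta>)) (\<lambda>x. norm (W (t, x))) \<le> exp ((N - 1) * A t) * (\<Phi> 0 + (\<epsilon> * measure lborel K) * A t)"
    using lower gron by linarith
  also have "\<dots> \<le> exp ((N - 1) * A t) * (integral (ball x0 \<rho>) (\<lambda>x. norm (W (0, x))) + \<epsilon> * measure lborel K + (\<epsilon> * measure lborel K) * A t)"
    using upper by (intro mult_left_mono) auto
  also have "\<dots> = exp ((N - 1) * A t) * (integral (ball x0 \<rho>) (\<lambda>x. norm (W (0, x))) + \<epsilon> * (measure lborel K * (1 + A t)))"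
    by (simp add: algebra_simps)
  finally show ?thesis by (simp add: W_def A_def N_def \<rho>_def K_def)
qed

lemma ball_limit:
  fixes g :: "real^'n \<Rightarrow> real"
  assumes cont: "continuous_on UNIV g" and R: "0 < R"
    and bd: "\<And>\<eta>. 0 < \<eta> \<Longrightarrow> \<eta> < R \<Longrightarrow> (LINT x : ball c (R - \<eta>) | lborel. g x) \<le> Y"
  shows "(LINT x : ball c R | lborel. g x) \<le> Y"
proof -
  define s where "s n = (\<lambda>x. indicator (ball c (R - R / (real n + 2))) x *\<^sub>R g x)" for n :: nat
  define f where "f = (\<lambda>x. indicator (ball c R) x *\<^sub>R g x)"
  define w where "w = (\<lambda>x. indicator (cball c R) x *\<^sub>R norm (g x))"
  have lim: "(\<lambda>n. integral\<^sup>L lborel (s n)) \<longlonglongrightarrow> integral\<^sup>L lborel f"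
  proof (rule integral_dominated_convergence[where w=w])
    show "f \<in> borel_measurable lborel" unfolding f_def measurable_lborel2
      by (rule borel_measurable_continuous_on_indicator) (auto intro: continuous_on_subset[OF cont])
    show "s n \<in> borel_measurable lborel" for n unfolding s_def measurable_lborel2
      by (rule borel_measurable_continuous_on_indicator) (auto intro: continuous_on_subset[OF cont])
    show "integrable lborel w" unfolding w_def
      by (rule borel_integrable_compact[OF compact_cball]) (intro continuous_intros continuous_on_subset[OF cont], simp)
    show "AE x in lborel. (\<lambda>n. s n x) \<longlonglongrightarrow> f x"
    proof (rule AE_I2)
      fix x :: "real^'n"
      show "(\<lambda>n. s n x) \<longlonglongrightarrow> f x"
      proof (cases "x \<in> ball c R")
        case True
        then have d: "0 < R - dist c x" by simp
        obtain N :: nat where N: "R / (R - dist c x) < real N" using reals_Archimedean2 by blast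
        have "s n x = f x" if "N \<le> n" for n
        proof -
          have "R / (R - dist c x) < real n + 2" using N that by linarith
          then have "R < (real n + 2) * (R - dist c x)" using d by (simp add: divide_less_eq)
          then have "R / (real n + 2) < R - dist c x" by (simp add: divide_less_eq mult.commute)
          then have "x \<in> ball c (R - R / (real n + 2))" by simp
          then show ?thesis using True by (simp add: s_def f_def)
        qed
        then show ?thesis by (intro tendsto_eventually) (auto simp: eventually_sequentially)
      next
        case False
        have "x \<notin> ball c (R - R / (real n + 2))" for n
        proof -
          have "0 \<le> R / (real n + 2)" using R by simp
          then show ?thesis using False by auto
        qed
        then have "s n x = f x" for n using False by (simp add: s_def f_def)
        then show ?thesis by simp
      qed
    qed
    show "AE x in lborel. norm (s n x) \<le> w x" for n
    proof (rule AE_I2)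
      fix x :: "real^'n"
      have "0 \<le> R / (real n + 2)" using R by simp
      then have "ball c (R - R / (real n + 2)) \<subseteq> cball c R" by auto
      then show "norm (s n x) \<le> w x"
        by (auto simp: s_def w_def indicator_def)
    qed
  qed
  have "\<forall>n\<ge>0. integral\<^sup>L lborel (s n) \<le> Y"
  proof (intro allI impI)
    fix n :: nat
    have "0 < R / (real n + 2)" "R / (real n + 2) < R" using R by (auto simp: divide_less_eq)
    from bd[OF this] show "integral\<^sup>L lborel (s n) \<le> Y"
      by (simp add: s_def set_lebesgue_integral_def)
  qed
  from LIMSEQ_le_const2[OF lim] this have "integral\<^sup>L lborel f \<le> Y" by blast
  then show ?thesis by (simp add: f_def set_lebesgue_integral_def)
qed

lemma l1_le_sqrt:
  fixes v :: "real^'n"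
  shows "(\<Sum>i\<in>UNIV. \<bar>v$i\<bar>) \<le> sqrt (real CARD('n)) * norm v"
proof -
  have "(\<Sum>i\<in>UNIV. \<bar>v$i\<bar>)^2 \<le> (\<Sum>i\<in>(UNIV::'n set). (1::real)^2) * (\<Sum>i\<in>UNIV. \<bar>v$i\<bar>^2)"
    using Cauchy_Schwarz_ineq_sum[where a="\<lambda>i. (1::real)" and b="\<lambda>i. \<bar>v$i\<bar>" and I=UNIV] by simp
  also have "(\<Sum>i\<in>UNIV. \<bar>v$i\<bar>^2) = inner v v"
    by (simp add: inner_vec_def power2_eq_square)
  also have "inner v v = (norm v)^2" by (simp add: power2_norm_eq_inner)
  finally have "(\<Sum>i\<in>UNIV. \<bar>v$i\<bar>)^2 \<le> real CARD('n) * (norm v)^2" by simp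
  then have "(\<Sum>i\<in>UNIV. \<bar>v$i\<bar>) \<le> sqrt (real CARD('n) * (norm v)^2)" by (rule real_le_rsqrt)
  also have "\<dots> = sqrt (real CARD('n)) * norm v" by (simp add: real_sqrt_mult)
  finally show ?thesis .
qed

lemma set_int_ball:
  fixes f :: "real^'n \<Rightarrow> real"
  assumes "continuous_on UNIV f"
  shows "set_integrable lborel (ball c r) f"
proof -
  have "set_integrable lborel (cball c r) f"
    unfolding set_integrable_def by (rule borel_integrable_compact[OF compact_cball continuous_on_subset[OF assms]]) simp
  then show ?thesis by (rule set_integrable_subset) auto
qed

theorem mainTheorem14:
  fixes T :: real
    and a :: "real \<times> (real ^ 'n) \<Rightarrow> real ^ 'n"
    and \<alpha> :: "real \<Rightarrow> real"
    and u :: "real \<times> (real ^ 'n) \<Rightarrow> real"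
    and Du :: "real \<times> (real ^ 'n) \<Rightarrow> ((real \<times> (real ^ 'n)) \<Rightarrow>\<^sub>L real)"
  assumes T_pos: "0 < T"
    and a_C1: "C1_on a ({0..T} \<times> UNIV)"
    and a_bounded: "bounded (a ` ({0..T} \<times> UNIV))"
    and alpha_int: "set_integrable lborel {0..T} \<alpha>"
    and alpha_nonneg: "AE s in lborel. s \<in> {0..T} \<longrightarrow> 0 \<le> \<alpha> s"
    and OSLC: "AE s in lborel. s \<in> {0..T} \<longrightarrow>
                 (\<forall>x y. inner (a (s, y) - a (s, x)) (y - x) \<le> \<alpha> s * (norm (y - x))\<^sup>2)"
    and u_C2: "has_C1_derivative_on u Du ({0..T} \<times> UNIV) \<and> C1_on Du ({0..T} \<times> UNIV)"
    and transport: "\<forall>p \<in> {0..T} \<times> UNIV. Du p (1, a p) = 0"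
  shows "\<forall>t \<in> {0..T}. \<forall>x0 :: real ^ 'n. \<forall>R > 0.
      (LINT x : ball x0 R | lborel. (\<Sum>i\<in>UNIV. \<bar>Du (t, x) (0, axis i 1)\<bar>))
      \<le> sqrt (real CARD('n)) * exp ((real CARD('n) - 1) * (LINT s : {0..t} | lborel. \<alpha> s))
         * (LINT x : ball x0 (R + t * (SUP p \<in> {0..T} \<times> UNIV. norm (a p))) | lborel.
              (\<Sum>i\<in>UNIV. \<bar>Du (0, x) (0, axis i 1)\<bar>))"
proof (intro ballI allI impI)
  fix t :: real and x0 :: "real^'n" and R :: real
  assume t: "t \<in> {0..T}" and R: "0 < R"
  define S where "S = {0..T} \<times> (UNIV :: (real^'n) set)"
  define M where "M = (SUP p \<in> {0..T} \<times> UNIV. norm (a p))"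
  obtain Da where hDa: "has_C1_derivative_on a Da S" using a_C1 by (auto simp: C1_on_def S_def)
  obtain D2u where hu2: "has_C1_derivative_on Du D2u S" using u_C2 by (auto simp: C1_on_def S_def)
  have hu: "has_C1_derivative_on u Du S" using u_C2 by (simp add: S_def)
  have bdd: "bdd_above ((\<lambda>p. norm (a p)) ` ({0..T} \<times> UNIV))"
  proof -
    obtain B where "\<forall>y\<in>a ` ({0..T} \<times> UNIV). norm y \<le> B" using a_bounded by (auto simp: bounded_iff)
    then show ?thesis by (auto intro!: bdd_aboveI[where M=B])
  qed
  have aM: "norm (a q) \<le> M" if "q \<in> {0..T} \<times> UNIV" for q
    unfolding M_def by (rule cSUP_upper[OF that bdd])
  have "AE s in lborel. s \<in> {0..T} \<longrightarrow> (0 \<le> \<alpha> s \<and>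
      (\<forall>x y. inner (a (s, y) - a (s, x)) (y - x) \<le> \<alpha> s * (norm (y - x))\<^sup>2))" (is "AE s in lborel. ?P s")
    using alpha_nonneg OSLC by eventually_elim auto
  then obtain E where E0: "{s \<in> space lborel. \<not> ?P s} \<subseteq> E"
    and Eem: "emeasure lborel E = 0" and Esets: "E \<in> sets lborel"
    by (rule AE_E)
  have E1: "E \<in> null_sets lborel" using Eem Esets by (simp add: null_sets_def)
  have E: "negligible E" unfolding negligible_iff_null_sets
    by (rule null_sets_completionI[OF E1])
  have good: "0 \<le> \<alpha> s \<and> (\<forall>x y. inner (a (s, y) - a (s, x)) (y - x) \<le> \<alpha> s * (norm (y - x))^2)"
    if "s \<in> {0..T} - E" for s
    using E0 that by auto
  have si: "set_integrable lborel {0..t} \<alpha>"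
    by (rule set_integrable_subset[OF alpha_int]) (use t in auto)
  have aint: "\<alpha> integrable_on {0..T}" using set_borel_integral_eq_integral(1)[OF alpha_int] .
  have Aeq: "(LINT s : {0..t} | lborel. \<alpha> s) = integral {0..t} \<alpha>"
    using set_borel_integral_eq_integral(2)[OF si] .
  have Atnn: "0 \<le> integral {0..t} \<alpha>"
  proof (rule integral_nonneg_ae[OF E])
    fix x assume "x \<in> {0..t} - E"
    then have "x \<in> {0..T} - E" using t by auto
    then show "0 \<le> \<alpha> x" using good by blast
  next
    show "\<alpha> integrable_on {0..t}" by (rule integrable_on_subinterval[OF aint]) (use t in auto)
  qed
  define N where "N = real CARD('n)"
  define E1 where "E1 = exp ((N - 1) * integral {0..t} \<alpha>)"
  define W where "W = gradx Du"
  have cDu: "continuous_on S Du" using hu by (simp add: has_C1_derivative_on_def)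
  have cW: "continuous_on UNIV (\<lambda>x. norm (W (s, x)))" if "s \<in> {0..T}" for s
    unfolding W_def gradx_def
    by (intro continuous_intros continuous_on_compose2[OF cDu]) (use that in \<open>auto simp: S_def\<close>)
  have l1eq: "(\<Sum>i\<in>UNIV. \<bar>Du (s, x) (0, axis i 1)\<bar>) = (\<Sum>i\<in>UNIV. \<bar>W (s, x) $ i\<bar>)" for s x
    by (simp add: W_def gradx_nth)
  have cl1: "continuous_on UNIV (\<lambda>x. \<Sum>i\<in>UNIV. \<bar>Du (s, x) (0, axis i 1)\<bar>)" if "s \<in> {0..T}" for s
    by (intro continuous_intros continuous_on_compose2[OF cDu]) (use that in \<open>auto simp: S_def\<close>)
  define I0 where "I0 = integral (ball x0 (R + t * M)) (\<lambda>x. norm (W (0, x)))"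
  have step1: "(LINT x : ball x0 (R - \<eta>) | lborel. norm (W (t, x))) \<le> E1 * I0" if \<eta>: "0 < \<eta>" "\<eta> < R" for \<eta>
  proof -
    have eqL: "(LINT x : ball x0 (R - \<eta>) | lborel. norm (W (t, x))) = integral (ball x0 (R - \<eta>)) (\<lambda>x. norm (W (t, x)))"
      by (rule int_ball(2)) (rule continuous_on_subset[OF cW], use t in auto)
    define C where "C = measure lborel (cbox (x0 - (\<chi> j. R + t * M + 1)) (x0 + (\<chi> j. R + t * M + 1))) * (1 + integral {0..t} \<alpha>)"
    have C: "0 \<le> C" using Atnn by (simp add: C_def)
    have "integral (ball x0 (R - \<eta>)) (\<lambda>x. norm (W (t, x))) \<le> E1 * I0"
    proof (rule eps_le)
      show "0 \<le> E1 * C" using C by (simp add: E1_def)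
      fix \<epsilon> :: real assume \<epsilon>: "0 < \<epsilon>"
      have "integral (ball x0 (R - \<eta>)) (\<lambda>x. norm (W (t, x))) \<le> E1 * (I0 + \<epsilon> * C)"
        unfolding W_def E1_def I0_def C_def N_def
      proof (rule core[OF T_pos _ _ hDa[unfolded S_def] hu[unfolded S_def] hu2[unfolded S_def] _ aM E good aint \<eta> \<epsilon>])
        show "0 \<le> t" "t \<le> T" using t by auto
        show "\<And>q. q \<in> {0..T} \<times> UNIV \<Longrightarrow> Du q (1, a q) = 0" using transport by auto
      qed
      then show "integral (ball x0 (R - \<eta>)) (\<lambda>x. norm (W (t, x))) \<le> E1 * I0 + \<epsilon> * (E1 * C)"
        by (simp add: algebra_simps)
    qed
    then show ?thesis using eqL by simp
  qed
  have step2: "(LINT x : ball x0 R | lborel. norm (W (t, x))) \<le> E1 * I0"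
    by (rule ball_limit[OF cW R step1]) (use t in auto)
  have "(LINT x : ball x0 R | lborel. (\<Sum>i\<in>UNIV. \<bar>Du (t, x) (0, axis i 1)\<bar>))
      \<le> (LINT x : ball x0 R | lborel. sqrt N * norm (W (t, x)))"
  proof (rule set_integral_mono)
    show "set_integrable lborel (ball x0 R) (\<lambda>x. \<Sum>i\<in>UNIV. \<bar>Du (t, x) (0, axis i 1)\<bar>)"
      by (rule set_int_ball[OF cl1]) (use t in auto)
    show "set_integrable lborel (ball x0 R) (\<lambda>x. sqrt N * norm (W (t, x)))"
      by (rule set_int_ball) (intro continuous_intros cW, use t in auto)
    show "(\<Sum>i\<in>UNIV. \<bar>Du (t, x) (0, axis i 1)\<bar>) \<le> sqrt N * norm (W (t, x))" for x
      unfolding l1eq N_def by (rule l1_le_sqrt)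
  qed
  also have "\<dots> = sqrt N * (LINT x : ball x0 R | lborel. norm (W (t, x)))"
    by (simp add: set_integral_mult_right)
  also have "\<dots> \<le> sqrt N * (E1 * I0)"
    using step2 by (intro mult_left_mono) (auto simp: N_def)
  also have "I0 = (LINT x : ball x0 (R + t * M) | lborel. norm (W (0, x)))"
    unfolding I0_def by (rule int_ball(2)[symmetric]) (rule continuous_on_subset[OF cW], use T_pos in auto)
  also have "\<dots> \<le> (LINT x : ball x0 (R + t * M) | lborel. (\<Sum>i\<in>UNIV. \<bar>Du (0, x) (0, axis i 1)\<bar>))"
  proof (rule set_integral_mono)
    show "set_integrable lborel (ball x0 (R + t * M)) (\<lambda>x. norm (W (0, x)))"
      by (rule set_int_ball[OF cW]) (use T_pos in auto)
    show "set_integrable lborel (ball x0 (R + t * M)) (\<lambda>x. \<Sum>i\<in>UNIV. \<bar>Du (0, x) (0, axis i 1)\<bar>)"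
      by (rule set_int_ball[OF cl1]) (use T_pos in auto)
    show "norm (W (0, x)) \<le> (\<Sum>i\<in>UNIV. \<bar>Du (0, x) (0, axis i 1)\<bar>)" for x
      unfolding l1eq by (rule norm_le_l1_cart)
  qed
  finally show "(LINT x : ball x0 R | lborel. (\<Sum>i\<in>UNIV. \<bar>Du (t, x) (0, axis i 1)\<bar>))
      \<le> sqrt (real CARD('n)) * exp ((real CARD('n) - 1) * (LINT s : {0..t} | lborel. \<alpha> s))
         * (LINT x : ball x0 (R + t * (SUP p \<in> {0..T} \<times> UNIV. norm (a p))) | lborel.
              (\<Sum>i\<in>UNIV. \<bar>Du (0, x) (0, axis i 1)\<bar>))"
    using real_sqrt_ge_zero E1_def
    by (simp add: Aeq E1_def N_def M_def mult.assoc mult_left_mono)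
qed

end
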